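(* Let $K$ be a field, $P=K[x_1,\dots,x_n]$, $I$ an ideal of $P$ contained in $\mathfrak{M}=\langle x_1,\dots,x_n\rangle$, $\mathfrak{m}=\mathfrak{M}/I$, and let $\overline G$ be a marked reduced Gröbner basis of $I$. (a) $\#\mathrm{LI}(\overline G)\le\dim_K(\mathrm{Lin}_{\mathfrak M}(I))$. (b) $\dim_K(\mathrm{Cot}_{\mathfrak m}(P/I))\le\mathrm{edim}(P/I)\le\mathrm{sepdim}(P/I)\le n-\#\mathrm{LI}(\overline G)$.
   Context: $\mathrm{Cot}_{\mathfrak m}(R)=\mathfrak m/\mathfrak m^2$. For $f\in\mathfrak M$, $\mathrm{Lin}_{\mathfrak M}(f)$ is the homogeneous degree-one part of $f$, and $\mathrm{Lin}_{\mathfrak M}(I)=\langle\mathrm{Lin}_{\mathfrak M}(f)\mid f\in I\rangle_K$. A marked reduced Gröbner basis of $I$ is $\{(\mathrm{LT}_\sigma(g),g)\mid g\in G\}$ with $G$ the reduced $\sigma$-Gröbner basis of $I$ for a term ordering $\sigma$; $\mathrm{LI}(\overline G)$ is the set of indeterminates occurring as marked leading terms in $\overline G$. The embedding dimension $\mathrm{edim}(P/I)$ is the minimal $m$ such that $P/I\cong K[y_1,\dots,y_m]/I'$ as $K$-algebras for some ideal $I'$. For $f\in P$, $\mathrm{indets}(f)$ is the set of indeterminates dividing some term in the support of $f$; for $f\in\mathfrak M$ with $z$ occurring in $\mathrm{Lin}_{\mathfrak M}(f)$ with coefficient $c\ne 0$ in $f$, $\mathrm{tail}_z(f)=z-\frac1cf$,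 and $f$ is $z$-separating if $z\notin\mathrm{indets}(\mathrm{tail}_z(f))$. For distinct indeterminates $Z=\{z_1,\dots,z_s\}$, a tuple $(f_1,\dots,f_s)$ of nonzero elements of $\mathfrak M$ is coherently $Z$-separating if each $f_i$ is $z_i$-separating and $z_i\notin\mathrm{indets}(f_j)$ for $j\ne i$. The separating embedding dimension is $\mathrm{sepdim}(P/I)=n-\max\{\#Z\mid Z\subseteq X,\ I \text{ contains a coherently } Z\text{-separating tuple}\}$ (with $Z=\emptyset$ allowed). *)

theory Defs
  imports Main "HOL.Vector_Spaces" "HOL-Library.Poly_Mapping"
begin

text \<open>The ring K[x_1,...,x_n] is the set of polynomials involving only x_0,...,x_{n-1}.\<close>

type_synonym 'k mpoly = "(nat \<Rightarrow>\<^sub>0 nat) \<Rightarrow>\<^sub>0 'k"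

definition Var :: "nat \<Rightarrow> ('k::comm_ring_1) mpoly" where
  "Var i = Poly_Mapping.single (Poly_Mapping.single i 1) 1"

definition Const :: "'k::comm_ring_1 \<Rightarrow> 'k mpoly" where
  "Const c = Poly_Mapping.single 0 c"

definition pscale :: "'k::comm_ring_1 \<Rightarrow> 'k mpoly \<Rightarrow> 'k mpoly" where
  "pscale c p = Const c * p"

definition indets :: "('k::zero) mpoly \<Rightarrow> nat set" where
  "indets f = (\<Union>t\<in>Poly_Mapping.keys f. Poly_Mapping.keys t)"

definition Pring :: "nat \<Rightarrow> ('k::comm_ring_1) mpoly set" where
  "Pring n = {f. indets f \<subseteq> {..<n}}"

text \<open>The maximal ideal M = <x_1,...,x_n> of P: polynomials with zero constant term.\<close>
definition Mideal :: "nat \<Rightarrow> ('k::comm_ring_1) mpoly set" where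
  "Mideal n = {f \<in> Pring n. Poly_Mapping.lookup f 0 = 0}"

definition is_ideal :: "nat \<Rightarrow> ('k::comm_ring_1) mpoly set \<Rightarrow> bool" where
  "is_ideal n I \<longleftrightarrow> I \<subseteq> Pring n \<and> 0 \<in> I \<and> (\<forall>a\<in>I. \<forall>b\<in>I. a + b \<in> I)
     \<and> (\<forall>a\<in>I. \<forall>f\<in>Pring n. f * a \<in> I)"

definition ideal_prod :: "('k::comm_ring_1) mpoly set \<Rightarrow> 'k mpoly set \<Rightarrow> 'k mpoly set" where
  "ideal_prod A B = {(\<Sum>i<(k::nat). a i * b i) | a b k. \<forall>i<k. a i \<in> A \<and> b i \<in> B}"

definition deg_mon :: "(nat \<Rightarrow>\<^sub>0 nat) \<Rightarrow> nat" where
  "deg_mon t = (\<Sum>i\<in>Poly_Mapping.keys t. Poly_Mapping.lookup t i)"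

definition Lin :: "('k::comm_ring_1) mpoly \<Rightarrow> 'k mpoly" where
  "Lin f = Abs_poly_mapping (\<lambda>t. if deg_mon t = 1 then Poly_Mapping.lookup f t else 0)"

definition LinI :: "('k::field) mpoly set \<Rightarrow> 'k mpoly set" where
  "LinI I = module.span pscale (Lin ` I)"

definition kdim :: "('k::field) mpoly set \<Rightarrow> nat" where
  "kdim V = vector_space.dim pscale V"

text \<open>Dimension of a quotient vector space V/W (W a subspace of V), taken as the dimension
  of a complementary subspace C of W in V (C \<oplus> W = V).\<close>
definition qdim :: "('k::field) mpoly set \<Rightarrow> 'k mpoly set \<Rightarrow> nat" where
  "qdim V W = kdim (SOME C. module.subspace pscale C \<and> C \<subseteq> V \<and> C \<inter> W = {0}
                          \<and> V = {c + w | c w. c \<in> C \<and> w \<in> W})"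

text \<open>dim_K Cot_m(P/I) where m = M/I: Cot = m/m^2 = (M/I)/((M^2+I)/I) = M/(M^2+I).\<close>
definition cotdim :: "nat \<Rightarrow> ('k::field) mpoly set \<Rightarrow> nat" where
  "cotdim n I = qdim (Mideal n)
      {a + b | a b. a \<in> ideal_prod (Mideal n) (Mideal n) \<and> b \<in> I}"

definition kalg_hom :: "nat \<Rightarrow> nat \<Rightarrow> (('k::field) mpoly \<Rightarrow> 'k mpoly) \<Rightarrow> bool" where
  "kalg_hom n m \<phi> \<longleftrightarrow> \<phi> ` Pring n \<subseteq> Pring m
     \<and> (\<forall>f\<in>Pring n. \<forall>g\<in>Pring n. \<phi> (f + g) = \<phi> f + \<phi> g \<and> \<phi> (f * g) = \<phi> f * \<phi> g)
     \<and> (\<forall>c. \<phi> (Const c) = Const c)"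

text \<open>P_n/I is isomorphic as a K-algebra to P_m/J: there is a K-algebra homomorphism
  P_n -> P_m inducing an isomorphism P_n/I -> P_m/J (kernel of the composite map is I,
  and the composite map is surjective).\<close>
definition quot_iso :: "nat \<Rightarrow> ('k::field) mpoly set \<Rightarrow> nat \<Rightarrow> 'k mpoly set \<Rightarrow> bool" where
  "quot_iso n I m J \<longleftrightarrow> (\<exists>\<phi>. kalg_hom n m \<phi>
      \<and> {f \<in> Pring n. \<phi> f \<in> J} = I
      \<and> (\<forall>q\<in>Pring m. \<exists>f\<in>Pring n. q - \<phi> f \<in> J))"

definition edim :: "nat \<Rightarrow> ('k::field) mpoly set \<Rightarrow> nat" where
  "edim n I = (LEAST m. \<exists>J. is_ideal m J \<and> quot_iso n I m J)"

definition tail :: "nat \<Rightarrow> ('k::field) mpoly \<Rightarrow> 'k mpoly" where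
  "tail z f = Var z - pscale (inverse (Poly_Mapping.lookup f (Poly_Mapping.single z 1))) f"

definition separating :: "nat \<Rightarrow> ('k::field) mpoly \<Rightarrow> bool" where
  "separating z f \<longleftrightarrow> Poly_Mapping.lookup f (Poly_Mapping.single z 1) \<noteq> 0 \<and> z \<notin> indets (tail z f)"

definition coherently_separating :: "nat \<Rightarrow> nat set \<Rightarrow> (nat \<Rightarrow> ('k::field) mpoly) \<Rightarrow> bool" where
  "coherently_separating n Z f \<longleftrightarrow> Z \<subseteq> {..<n} \<and>
     (\<forall>z\<in>Z. f z \<noteq> 0 \<and> f z \<in> Mideal n \<and> separating z (f z)
            \<and> (\<forall>z'\<in>Z. z' \<noteq> z \<longrightarrow> z \<notin> indets (f z')))"

definition sepdim :: "nat \<Rightarrow> ('k::field) mpoly set \<Rightarrow> nat" where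
  "sepdim n I = n - Max {card Z | Z. Z \<subseteq> {..<n} \<and>
                     (\<exists>f. (\<forall>z\<in>Z. f z \<in> I) \<and> coherently_separating n Z f)}"

definition mons :: "nat \<Rightarrow> (nat \<Rightarrow>\<^sub>0 nat) set" where
  "mons n = {t. Poly_Mapping.keys t \<subseteq> {..<n}}"

definition term_order :: "nat \<Rightarrow> ((nat \<Rightarrow>\<^sub>0 nat) \<Rightarrow> (nat \<Rightarrow>\<^sub>0 nat) \<Rightarrow> bool) \<Rightarrow> bool" where
  "term_order n le \<longleftrightarrow>
     (\<forall>s\<in>mons n. le s s)
   \<and> (\<forall>s\<in>mons n. \<forall>t\<in>mons n. le s t \<and> le t s \<longrightarrow> s = t)
   \<and> (\<forall>s\<in>mons n. \<forall>t\<in>mons n. \<forall>u\<in>mons n. le s t \<and> le t u \<longrightarrow> le s u)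
   \<and> (\<forall>s\<in>mons n. \<forall>t\<in>mons n. le s t \<or> le t s)
   \<and> (\<forall>t\<in>mons n. le 0 t)
   \<and> (\<forall>s\<in>mons n. \<forall>t\<in>mons n. \<forall>u\<in>mons n. le s t \<longrightarrow> le (s + u) (t + u))"

definition lm :: "((nat \<Rightarrow>\<^sub>0 nat) \<Rightarrow> (nat \<Rightarrow>\<^sub>0 nat) \<Rightarrow> bool) \<Rightarrow> ('k::zero) mpoly \<Rightarrow> nat \<Rightarrow>\<^sub>0 nat" where
  "lm le f = (THE t. t \<in> Poly_Mapping.keys f \<and> (\<forall>s\<in>Poly_Mapping.keys f. le s t))"

definition LT :: "((nat \<Rightarrow>\<^sub>0 nat) \<Rightarrow> (nat \<Rightarrow>\<^sub>0 nat) \<Rightarrow> bool) \<Rightarrow> ('k::comm_ring_1) mpoly \<Rightarrow> 'k mpoly" where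
  "LT le f = Poly_Mapping.single (lm le f) (Poly_Mapping.lookup f (lm le f))"

definition mdvd :: "(nat \<Rightarrow>\<^sub>0 nat) \<Rightarrow> (nat \<Rightarrow>\<^sub>0 nat) \<Rightarrow> bool" where
  "mdvd s t \<longleftrightarrow> (\<forall>i. Poly_Mapping.lookup s i \<le> Poly_Mapping.lookup t i)"

definition reduced_GB :: "nat \<Rightarrow> ((nat \<Rightarrow>\<^sub>0 nat) \<Rightarrow> (nat \<Rightarrow>\<^sub>0 nat) \<Rightarrow> bool)
                          \<Rightarrow> ('k::field) mpoly set \<Rightarrow> 'k mpoly set \<Rightarrow> bool" where
  "reduced_GB n le I G \<longleftrightarrow> finite G \<and> G \<subseteq> I - {0}
     \<and> (\<forall>f\<in>I - {0}. \<exists>g\<in>G. mdvd (lm le g) (lm le f))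
     \<and> (\<forall>g\<in>G. Poly_Mapping.lookup g (lm le g) = 1)
     \<and> (\<forall>g\<in>G. \<forall>t\<in>Poly_Mapping.keys g. \<forall>g'\<in>G. (g' \<noteq> g \<or> t \<noteq> lm le g) \<longrightarrow> \<not> mdvd (lm le g') t)"

definition LI :: "nat \<Rightarrow> ((nat \<Rightarrow>\<^sub>0 nat) \<Rightarrow> (nat \<Rightarrow>\<^sub>0 nat) \<Rightarrow> bool) \<Rightarrow> ('k::field) mpoly set \<Rightarrow> nat set" where
  "LI n le G = {i. i < n \<and> (\<exists>g\<in>G. LT le g = Var i)}"

end

theory Submission
  imports Defs "HOL.Vector_Spaces"
begin

lemma lookup_map_mult: "Poly_Mapping.lookup (Poly_Mapping.map ((*) (s::_::semiring_0)) p) t = s * Poly_Mapping.lookup p t"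
  by (simp add: Poly_Mapping.map.rep_eq when_def)

lemma lookup_pscale[simp]: "Poly_Mapping.lookup (pscale c p) t = c * Poly_Mapping.lookup p t"
  unfolding pscale_def Const_def
  by (metis lookup_map_mult mult_map_scale_conv_mult)

lemma Const_mult_lookup[simp]: "Poly_Mapping.lookup (Const c * p) t = c * Poly_Mapping.lookup p t"
  using lookup_pscale[unfolded pscale_def] .

lemma vs_pscale: "vector_space (pscale :: 'k::field \<Rightarrow> 'k mpoly \<Rightarrow> 'k mpoly)"
  by unfold_locales (auto intro!: poly_mapping_eqI simp: lookup_add algebra_simps)

lemma Const_0[simp]: "Const 0 = 0" by (simp add: Const_def)
lemma Const_1[simp]: "Const 1 = 1" by (simp add: Const_def)
lemma Const_add: "Const (a+b) = Const a + Const b" by (simp add: Const_def single_add)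
lemma Const_mult: "Const (a*b) = Const a * Const b" by (simp add: Const_def mult_single)
lemma Const_uminus: "Const (-a) = - Const a" by (simp add: Const_def single_uminus)
lemma Const_diff: "Const (a-b) = Const a - Const b" by (simp add: Const_def single_diff)
lemma lookup_Const: "Poly_Mapping.lookup (Const c) t = (if t = 0 then c else 0)"
  by (simp add: Const_def lookup_single when_def)
lemma keys_Const: "Poly_Mapping.keys (Const c) \<subseteq> {0}" by (simp add: Const_def)

lemma poly_expand: "(p :: 'a \<Rightarrow>\<^sub>0 'b::comm_monoid_add) = (\<Sum>t\<in>Poly_Mapping.keys p. Poly_Mapping.single t (Poly_Mapping.lookup p t))"
proof (rule poly_mapping_eqI)
  fix k
  have "(\<Sum>t\<in>Poly_Mapping.keys p. Poly_Mapping.lookup (Poly_Mapping.single t (Poly_Mapping.lookup p t)) k)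
       = (\<Sum>t\<in>Poly_Mapping.keys p. if t = k then Poly_Mapping.lookup p t else 0)"
    by (rule sum.cong) (auto simp: lookup_single when_def)
  also have "\<dots> = Poly_Mapping.lookup p k"
    by (simp add: in_keys_iff)
  finally show "Poly_Mapping.lookup p k = Poly_Mapping.lookup (\<Sum>t\<in>Poly_Mapping.keys p. Poly_Mapping.single t (Poly_Mapping.lookup p t)) k"
    by (simp add: lookup_sum)
qed

lemma single_Const: "Poly_Mapping.single t c = Const c * Poly_Mapping.single t (1::'k::comm_ring_1)"
  by (simp add: Const_def mult_single)

lemma pscale_Const_mult: "pscale c p = Const c * p" by (simp add: pscale_def)

lemma keys_add_nat: "Poly_Mapping.keys (s + t) = Poly_Mapping.keys s \<union> Poly_Mapping.keys (t :: 'a \<Rightarrow>\<^sub>0 nat)"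
  by (auto simp: in_keys_iff lookup_add)

lemma indets_add: "indets (p + q) \<subseteq> indets p \<union> indets q"
  unfolding indets_def using keys_add[of p q] by auto

lemma indets_mult: "indets (p * q) \<subseteq> indets p \<union> indets q"
  unfolding indets_def using keys_mult[of p q] by (force simp: keys_add_nat)

lemma indets_Const[simp]: "indets (Const c) = {}"
  unfolding indets_def using keys_Const[of c] by auto

lemma indets_zero[simp]: "indets 0 = {}" unfolding indets_def by simp
lemma indets_one[simp]: "indets (1::'k::comm_ring_1 mpoly) = {}" unfolding indets_def by simp

lemma indets_uminus[simp]: "indets (- p) = indets (p::'k::ab_group_add mpoly)"
  unfolding indets_def by (simp add: keys_def)

lemma indets_diff: "indets (p - q) \<subseteq> indets p \<union> indets (q::'k::ab_group_add mpoly)"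
  using indets_add[of p "-q"] by simp

lemma indets_Var: "indets (Var i :: 'k::comm_ring_1 mpoly) \<subseteq> {i}"
  unfolding indets_def Var_def by auto

lemma indets_sum: "indets (sum f A) \<subseteq> (\<Union>a\<in>A. indets (f a))"
  unfolding indets_def using keys_sum[of f A] by blast

lemma indets_prod: "indets (prod f A :: 'k::comm_ring_1 mpoly) \<subseteq> (\<Union>a\<in>A. indets (f a))"
proof (induction A rule: infinite_finite_induct)
  case (insert x F)
  then show ?case using indets_mult[of "f x" "prod f F"] by auto
qed auto

lemma indets_power: "indets (p ^ k :: 'k::comm_ring_1 mpoly) \<subseteq> indets p"
  by (induction k) (use indets_mult in auto)

lemma indets_single: "indets (Poly_Mapping.single t c) \<subseteq> Poly_Mapping.keys t"
  unfolding indets_def by auto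

lemma Pring_add: "p \<in> Pring n \<Longrightarrow> q \<in> Pring n \<Longrightarrow> p + q \<in> Pring n"
  unfolding Pring_def using indets_add by blast
lemma Pring_mult: "p \<in> Pring n \<Longrightarrow> q \<in> Pring n \<Longrightarrow> p * q \<in> Pring n"
  unfolding Pring_def using indets_mult by blast
lemma Pring_diff: "p \<in> Pring n \<Longrightarrow> q \<in> Pring n \<Longrightarrow> p - q \<in> Pring n"
  unfolding Pring_def using indets_diff by blast
lemma Pring_uminus: "p \<in> Pring n \<Longrightarrow> - p \<in> Pring n"
  unfolding Pring_def by simp
lemma Pring_Const[simp]: "Const c \<in> Pring n" unfolding Pring_def by simp
lemma Pring_zero[simp]: "0 \<in> Pring n" unfolding Pring_def by simp
lemma Pring_one[simp]: "1 \<in> Pring n" unfolding Pring_def by simp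
lemma Pring_Var: "i < n \<Longrightarrow> Var i \<in> Pring n" unfolding Pring_def using indets_Var by fastforce
lemma Pring_sum: "(\<And>a. a \<in> A \<Longrightarrow> f a \<in> Pring n) \<Longrightarrow> sum f A \<in> Pring n"
  unfolding Pring_def using indets_sum by blast
lemma Pring_prod: "(\<And>a. a \<in> A \<Longrightarrow> f a \<in> Pring n) \<Longrightarrow> prod f A \<in> Pring n"
  unfolding Pring_def using indets_prod by blast
lemma Pring_power: "p \<in> Pring n \<Longrightarrow> p ^ k \<in> Pring n"
  unfolding Pring_def using indets_power by blast
lemma Pring_pscale: "p \<in> Pring n \<Longrightarrow> pscale c p \<in> Pring n"
  unfolding pscale_def by (simp add: Pring_mult)


definition monval :: "(nat \<Rightarrow> 'k::comm_ring_1 mpoly) \<Rightarrow> (nat \<Rightarrow>\<^sub>0 nat) \<Rightarrow> 'k mpoly" where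
  "monval \<sigma> t = (\<Prod>i\<in>Poly_Mapping.keys t. \<sigma> i ^ Poly_Mapping.lookup t i)"

definition subst :: "(nat \<Rightarrow> 'k::comm_ring_1 mpoly) \<Rightarrow> 'k mpoly \<Rightarrow> 'k mpoly" where
  "subst \<sigma> p = (\<Sum>t\<in>Poly_Mapping.keys p. Const (Poly_Mapping.lookup p t) * monval \<sigma> t)"

lemma monval_superset: "finite A \<Longrightarrow> Poly_Mapping.keys t \<subseteq> A \<Longrightarrow> monval \<sigma> t = (\<Prod>i\<in>A. \<sigma> i ^ Poly_Mapping.lookup t i)"
  unfolding monval_def by (rule prod.mono_neutral_left) (auto simp: in_keys_iff)

lemma monval_add: "monval \<sigma> (s + t) = monval \<sigma> s * monval \<sigma> t"
proof -
  let ?A = "Poly_Mapping.keys s \<union> Poly_Mapping.keys t"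
  have "monval \<sigma> (s + t) = (\<Prod>i\<in>?A. \<sigma> i ^ Poly_Mapping.lookup (s+t) i)"
    by (rule monval_superset) (auto simp: keys_add_nat)
  also have "\<dots> = (\<Prod>i\<in>?A. \<sigma> i ^ Poly_Mapping.lookup s i) * (\<Prod>i\<in>?A. \<sigma> i ^ Poly_Mapping.lookup t i)"
    by (simp add: lookup_add power_add prod.distrib)
  also have "\<dots> = monval \<sigma> s * monval \<sigma> t"
    by (simp add: monval_superset[symmetric])
  finally show ?thesis .
qed

lemma monval_0[simp]: "monval \<sigma> 0 = 1" by (simp add: monval_def)

lemma subst_superset: "finite A \<Longrightarrow> Poly_Mapping.keys p \<subseteq> A \<Longrightarrow>
   subst \<sigma> p = (\<Sum>t\<in>A. Const (Poly_Mapping.lookup p t) * monval \<sigma> t)"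
  unfolding subst_def by (rule sum.mono_neutral_left) (auto simp: in_keys_iff)

lemma subst_add: "subst \<sigma> (p + q) = subst \<sigma> p + subst \<sigma> q"
proof -
  let ?A = "Poly_Mapping.keys p \<union> Poly_Mapping.keys q"
  have "subst \<sigma> (p + q) = (\<Sum>t\<in>?A. Const (Poly_Mapping.lookup (p+q) t) * monval \<sigma> t)"
    by (rule subst_superset) (use keys_add[of p q] in auto)
  also have "\<dots> = (\<Sum>t\<in>?A. Const (Poly_Mapping.lookup p t) * monval \<sigma> t) + (\<Sum>t\<in>?A. Const (Poly_Mapping.lookup q t) * monval \<sigma> t)"
    by (simp add: lookup_add Const_add distrib_right sum.distrib)
  also have "\<dots> = subst \<sigma> p + subst \<sigma> q"
    by (simp add: subst_superset[symmetric])
  finally show ?thesis .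
qed

lemma subst_0[simp]: "subst \<sigma> 0 = 0" by (simp add: subst_def)

lemma subst_sum: "subst \<sigma> (sum f A) = (\<Sum>a\<in>A. subst \<sigma> (f a))"
  by (induction A rule: infinite_finite_induct) (auto simp: subst_add)

lemma subst_single: "subst \<sigma> (Poly_Mapping.single t c) = Const c * monval \<sigma> t"
  by (subst subst_superset[of "{t}"]) (auto simp: lookup_single)

lemma subst_mult: "subst \<sigma> (p * q) = subst \<sigma> p * subst \<sigma> q"
proof -
  have "p * q = (\<Sum>s\<in>Poly_Mapping.keys p. Poly_Mapping.single s (Poly_Mapping.lookup p s)) *
                (\<Sum>t\<in>Poly_Mapping.keys q. Poly_Mapping.single t (Poly_Mapping.lookup q t))"
    by (simp add: poly_expand[symmetric])
  also have "\<dots> = (\<Sum>s\<in>Poly_Mapping.keys p. \<Sum>t\<in>Poly_Mapping.keys q.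
      Poly_Mapping.single (s+t) (Poly_Mapping.lookup p s * Poly_Mapping.lookup q t))"
    by (simp add: sum_product mult_single)
  finally have "subst \<sigma> (p*q) = (\<Sum>s\<in>Poly_Mapping.keys p. \<Sum>t\<in>Poly_Mapping.keys q.
      Const (Poly_Mapping.lookup p s * Poly_Mapping.lookup q t) * monval \<sigma> (s+t))"
    by (simp add: subst_sum subst_single)
  also have "\<dots> = (\<Sum>s\<in>Poly_Mapping.keys p. \<Sum>t\<in>Poly_Mapping.keys q.
      (Const (Poly_Mapping.lookup p s) * monval \<sigma> s) * (Const (Poly_Mapping.lookup q t) * monval \<sigma> t))"
    by (simp add: Const_mult monval_add algebra_simps)
  also have "\<dots> = subst \<sigma> p * subst \<sigma> q"
    by (simp add: subst_def sum_product)
  finally show ?thesis .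
qed

lemma subst_Const[simp]: "subst \<sigma> (Const c) = Const c"
  by (simp add: Const_def subst_single)

lemma subst_one[simp]: "subst \<sigma> 1 = 1"
  using subst_Const[of \<sigma> 1] by simp

lemma subst_Var[simp]: "subst \<sigma> (Var i) = \<sigma> i"
  by (simp add: Var_def subst_single monval_def)

lemma subst_uminus: "subst \<sigma> (- p) = - subst \<sigma> p"
  using subst_add[of \<sigma> p "-p"] by (simp add: add.inverse_unique)

lemma subst_diff: "subst \<sigma> (p - q) = subst \<sigma> p - subst \<sigma> q"
  using subst_add[of \<sigma> p "-q"] by (simp add: subst_uminus)

lemma subst_power: "subst \<sigma> (p ^ k) = subst \<sigma> p ^ k"
  by (induction k) (auto simp: subst_mult)

lemma subst_prod: "subst \<sigma> (prod f A) = (\<Prod>a\<in>A. subst \<sigma> (f a))"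
  by (induction A rule: infinite_finite_induct) (auto simp: subst_mult)

lemma subst_pscale: "subst \<sigma> (pscale c p) = pscale c (subst \<sigma> p)"
  by (simp add: pscale_def subst_mult)

lemma subst_cong: "(\<And>i. i \<in> indets p \<Longrightarrow> \<sigma> i = \<tau> i) \<Longrightarrow> subst \<sigma> p = subst \<tau> p"
  unfolding subst_def monval_def indets_def
  by (intro sum.cong refl arg_cong2[where f="(*)"] prod.cong arg_cong2[where f="(^)"]) auto

lemma closed_sum:
  assumes "\<And>a b. a \<in> S \<Longrightarrow> b \<in> S \<Longrightarrow> a + b \<in> S" "0 \<in> S" "\<And>a. a \<in> A \<Longrightarrow> f a \<in> S"
  shows "sum f A \<in> S"
  using assms(3) by (induction A rule: infinite_finite_induct) (auto simp: assms(1,2))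

lemma closed_prod:
  assumes "\<And>a b. a \<in> S \<Longrightarrow> b \<in> S \<Longrightarrow> a * b \<in> S" "1 \<in> S" "\<And>a. a \<in> A \<Longrightarrow> f a \<in> S"
  shows "prod f A \<in> S"
  using assms(3) by (induction A rule: infinite_finite_induct) (auto simp: assms(1,2))

lemma closed_power:
  assumes "\<And>a b. a \<in> S \<Longrightarrow> b \<in> S \<Longrightarrow> a * b \<in> S" "1 \<in> S" "x \<in> S"
  shows "x ^ k \<in> S"
  by (induction k) (auto simp: assms)

lemma monval_closed:
  assumes mult: "\<And>a b. a \<in> S \<Longrightarrow> b \<in> S \<Longrightarrow> a * b \<in> S" and one: "(1::'k::comm_ring_1 mpoly) \<in> S"
    and "\<And>i. i \<in> Poly_Mapping.keys t \<Longrightarrow> \<sigma> i \<in> S"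
  shows "monval \<sigma> t \<in> S"
  unfolding monval_def using assms by (intro closed_prod closed_power) auto

lemma subst_closed:
  assumes add: "\<And>a b. a \<in> S \<Longrightarrow> b \<in> S \<Longrightarrow> a + b \<in> S"
    and mult: "\<And>a b. a \<in> S \<Longrightarrow> b \<in> S \<Longrightarrow> a * b \<in> S"
    and const: "\<And>c. Const c \<in> S"
    and var: "\<And>i. i \<in> indets p \<Longrightarrow> \<sigma> i \<in> S"
  shows "subst \<sigma> p \<in> S"
proof -
  have one: "1 \<in> S" using const[of 1] by simp
  have zero: "0 \<in> S" using const[of 0] by simp
  show ?thesis unfolding subst_def
  proof (rule closed_sum[OF add zero])
    fix t assume t: "t \<in> Poly_Mapping.keys p"
    have "monval \<sigma> t \<in> S"
      by (rule monval_closed[OF mult one]) (use t var in \<open>auto simp: indets_def\<close>)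
    then show "Const (Poly_Mapping.lookup p t) * monval \<sigma> t \<in> S" using mult const by blast
  qed auto
qed

lemma indets_subst: "indets (subst \<sigma> p) \<subseteq> (\<Union>i\<in>indets p. indets (\<sigma> i))"
proof -
  let ?X = "\<Union>i\<in>indets p. indets (\<sigma> i)"
  have "subst \<sigma> p \<in> {q. indets q \<subseteq> ?X}"
    by (rule subst_closed) (use indets_add indets_mult in \<open>force+\<close>)
  then show ?thesis by simp
qed

lemma Pring_subst: "(\<And>i. i \<in> indets p \<Longrightarrow> \<sigma> i \<in> Pring m) \<Longrightarrow> subst \<sigma> p \<in> Pring m"
  by (rule subst_closed) (auto intro: Pring_add Pring_mult)

lemma hom_subst:
  assumes add: "\<And>a b. a \<in> S \<Longrightarrow> b \<in> S \<Longrightarrow> \<psi> (a + b) = \<psi> a + \<psi> b"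
    and mult: "\<And>a b. a \<in> S \<Longrightarrow> b \<in> S \<Longrightarrow> \<psi> (a * b) = \<psi> a * \<psi> b"
    and const: "\<And>c. \<psi> (Const c) = Const c"
    and Sadd: "\<And>a b. a \<in> S \<Longrightarrow> b \<in> S \<Longrightarrow> a + b \<in> S"
    and Smult: "\<And>a b. a \<in> S \<Longrightarrow> b \<in> S \<Longrightarrow> a * b \<in> S"
    and Sconst: "\<And>c. Const c \<in> S"
    and var: "\<And>i. i \<in> indets p \<Longrightarrow> \<sigma> i \<in> S"
  shows "\<psi> (subst \<sigma> p) = subst (\<psi> \<circ> \<sigma>) (p :: 'k::comm_ring_1 mpoly)"
proof -
  have one: "1 \<in> S" using Sconst[of 1] by simp
  have zero: "0 \<in> S" using Sconst[of 0] by simp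
  have psi0: "\<psi> 0 = 0" using const[of 0] by simp
  have psi1: "\<psi> 1 = 1" using const[of 1] by simp
  have hsum: "\<psi> (sum f A) = (\<Sum>a\<in>A. \<psi> (f a))" if "\<And>a. a \<in> A \<Longrightarrow> f a \<in> S" for f and A :: "'b set"
    using that
  proof (induction A rule: infinite_finite_induct)
    case (insert x F)
    have "sum f F \<in> S" by (rule closed_sum[OF Sadd zero]) (use insert in auto)
    then show ?case using insert by (simp add: add)
  qed (auto simp: psi0)
  have hprod: "\<psi> (prod f A) = (\<Prod>a\<in>A. \<psi> (f a))" if "\<And>a. a \<in> A \<Longrightarrow> f a \<in> S" for f and A :: "'b set"
    using that
  proof (induction A rule: infinite_finite_induct)
    case (insert x F)
    have "prod f F \<in> S" by (rule closed_prod[OF Smult one]) (use insert in auto)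
    then show ?case using insert by (simp add: mult)
  qed (auto simp: psi1)
  have hpow: "\<psi> (x ^ k) = \<psi> x ^ k" if "x \<in> S" for x k
  proof (induction k)
    case (Suc k)
    have "x ^ k \<in> S" by (rule closed_power[OF Smult one that])
    then show ?case using Suc that by (simp add: mult)
  qed (simp add: psi1)
  show ?thesis unfolding subst_def
  proof (subst hsum)
    fix t assume t: "t \<in> Poly_Mapping.keys p"
    have m: "monval \<sigma> t \<in> S"
      by (rule monval_closed[OF Smult one]) (use t var in \<open>auto simp: indets_def\<close>)
    show "Const (Poly_Mapping.lookup p t) * monval \<sigma> t \<in> S" using Smult[OF Sconst m] .
  next
    show "(\<Sum>t\<in>Poly_Mapping.keys p. \<psi> (Const (Poly_Mapping.lookup p t) * monval \<sigma> t)) =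
        (\<Sum>t\<in>Poly_Mapping.keys p. Const (Poly_Mapping.lookup p t) * monval (\<psi> \<circ> \<sigma>) t)"
    proof (rule sum.cong[OF refl])
      fix t assume t: "t \<in> Poly_Mapping.keys p"
      have vt: "\<sigma> i \<in> S" if "i \<in> Poly_Mapping.keys t" for i
        using t that var by (auto simp: indets_def)
      have m: "monval \<sigma> t \<in> S"
        by (rule monval_closed[OF Smult one]) (use vt in auto)
      have "\<psi> (monval \<sigma> t) = monval (\<psi> \<circ> \<sigma>) t"
        unfolding monval_def
        by (subst hprod) (auto intro: closed_power[OF Smult one] vt simp: hpow vt)
      then show "\<psi> (Const (Poly_Mapping.lookup p t) * monval \<sigma> t) = Const (Poly_Mapping.lookup p t) * monval (\<psi> \<circ> \<sigma>) t"
        by (simp add: mult[OF Sconst m] const)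
    qed
  qed
qed

lemma subst_subst: "subst \<tau> (subst \<sigma> p) = subst (\<lambda>i. subst \<tau> (\<sigma> i)) p"
  using hom_subst[where S=UNIV and \<psi>="subst \<tau>" and \<sigma>=\<sigma> and p=p]
  by (simp add: subst_add subst_mult comp_def)

lemma single_pow: "Poly_Mapping.single (Poly_Mapping.single i 1) (1::'k::comm_ring_1) ^ k
   = Poly_Mapping.single (Poly_Mapping.single i k) 1"
  by (induction k) (simp_all add: mult_single single_add[symmetric])

lemma prod_single: "(\<Prod>i\<in>A. Poly_Mapping.single (f i) (1::'k::comm_ring_1))
   = Poly_Mapping.single (\<Sum>i\<in>A. f i) 1"
  by (induction A rule: infinite_finite_induct) (simp_all add: mult_single)

lemma monval_Var: "monval Var t = Poly_Mapping.single t (1::'k::comm_ring_1)"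
proof -
  have "monval Var t = (\<Prod>i\<in>Poly_Mapping.keys t. Poly_Mapping.single (Poly_Mapping.single i (Poly_Mapping.lookup t i)) (1::'k))"
    unfolding monval_def Var_def by (intro prod.cong refl single_pow)
  also have "\<dots> = Poly_Mapping.single t 1"
    by (simp add: prod_single poly_expand[symmetric])
  finally show ?thesis .
qed

lemma subst_Var_id[simp]: "subst Var p = p"
  unfolding subst_def monval_Var
  by (simp add: single_Const[symmetric] poly_expand[symmetric])


lemma keys_mons: "f \<in> Pring n \<Longrightarrow> t \<in> Poly_Mapping.keys f \<Longrightarrow> t \<in> mons n"
  unfolding Pring_def mons_def indets_def by auto

lemma finite_max_exists:
  assumes to: "term_order n le" and fin: "finite A" and ne: "A \<noteq> {}" and sub: "A \<subseteq> mons n"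
  shows "\<exists>t\<in>A. \<forall>s\<in>A. le s t"
  using fin ne sub
proof (induction A rule: finite_ne_induct)
  case (singleton x)
  then show ?case using to unfolding term_order_def by auto
next
  case (insert x F)
  then obtain t where t: "t \<in> F" "\<forall>s\<in>F. le s t" by auto
  have xm: "x \<in> mons n" and tm: "t \<in> mons n" using insert t by auto
  show ?case
  proof (cases "le x t")
    case True then show ?thesis using t by auto
  next
    case False
    then have "le t x" using to xm tm unfolding term_order_def by blast
    have tr: "\<And>a b c. a \<in> mons n \<Longrightarrow> b \<in> mons n \<Longrightarrow> c \<in> mons n \<Longrightarrow> le a b \<Longrightarrow> le b c \<Longrightarrow> le a c"
      using to unfolding term_order_def by blast
    have "\<forall>s\<in>F. le s x"
    proof
      fix s assume "s \<in> F"
      then show "le s x" using tr[of s t x] t \<open>le t x\<close> xm tm insert.prems by auto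
    qed
    then show ?thesis using to xm unfolding term_order_def by auto
  qed
qed

lemma lm_props:
  assumes to: "term_order n le" and f: "f \<in> Pring n" "f \<noteq> 0"
  shows "lm le f \<in> Poly_Mapping.keys f" "\<forall>s\<in>Poly_Mapping.keys f. le s (lm le f)"
proof -
  have sub: "Poly_Mapping.keys f \<subseteq> mons n" using keys_mons f by blast
  obtain t where t: "t \<in> Poly_Mapping.keys f" "\<forall>s\<in>Poly_Mapping.keys f. le s t"
    using finite_max_exists[OF to _ _ sub] f by auto
  have "lm le f = t" unfolding lm_def
  proof (rule the_equality)
    show "t \<in> Poly_Mapping.keys f \<and> (\<forall>s\<in>Poly_Mapping.keys f. le s t)" using t by auto
  next
    fix t' assume "t' \<in> Poly_Mapping.keys f \<and> (\<forall>s\<in>Poly_Mapping.keys f. le s t')"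
    then show "t' = t" using t sub to unfolding term_order_def by (meson subsetD)
  qed
  then show "lm le f \<in> Poly_Mapping.keys f" "\<forall>s\<in>Poly_Mapping.keys f. le s (lm le f)" using t by auto
qed

lemma LT_Var:
  assumes "LT le g = Var i"
  shows "lm le g = Poly_Mapping.single i 1" "Poly_Mapping.lookup g (lm le g) = (1::'k::comm_ring_1)"
proof -
  have "Poly_Mapping.lookup (LT le g) (Poly_Mapping.single i 1) = (1::'k)"
    using assms by (simp add: Var_def)
  then have *: "lm le g = Poly_Mapping.single i 1 \<and> Poly_Mapping.lookup g (lm le g) = 1"
    unfolding LT_def by (auto simp: lookup_single when_def split: if_splits)
  then show "lm le g = Poly_Mapping.single i 1" "Poly_Mapping.lookup g (lm le g) = (1::'k)" by auto
qed

lemma mdvd_single: "i \<in> Poly_Mapping.keys t \<Longrightarrow> mdvd (Poly_Mapping.single i 1) t"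
  unfolding mdvd_def by (auto simp: lookup_single when_def in_keys_iff)

lemma lm_var_no_other:
  assumes to: "term_order n le" and g: "g \<in> Pring n" "g \<noteq> 0"
    and lm: "lm le g = Poly_Mapping.single i 1"
    and t: "t \<in> Poly_Mapping.keys g" "t \<noteq> Poly_Mapping.single i 1"
  shows "i \<notin> Poly_Mapping.keys t"
proof
  assume it: "i \<in> Poly_Mapping.keys t"
  define u where "u = t - Poly_Mapping.single i 1"
  have tu: "t = u + Poly_Mapping.single i 1"
    using it by (auto intro!: poly_mapping_eqI simp: u_def lookup_add lookup_minus lookup_single when_def in_keys_iff)
  have tm: "t \<in> mons n" using keys_mons g t by blast
  have im: "Poly_Mapping.single i 1 \<in> mons n" using lm_props(1)[OF to g] lm keys_mons[OF g(1)] by metis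
  have "Poly_Mapping.keys u \<subseteq> Poly_Mapping.keys t" unfolding u_def by (auto simp: in_keys_iff lookup_minus)
  then have um: "u \<in> mons n" using tm unfolding mons_def by auto
  have "le 0 u" using to um unfolding term_order_def by blast
  then have "le (0 + Poly_Mapping.single i 1) (u + Poly_Mapping.single i 1)"
  proof -
    have "0 \<in> mons n" unfolding mons_def by simp
    then show ?thesis using to um im \<open>le 0 u\<close> unfolding term_order_def by blast
  qed
  then have "le (Poly_Mapping.single i 1) t" using tu by simp
  moreover have "le t (Poly_Mapping.single i 1)" using lm_props(2)[OF to g] lm t by auto
  ultimately show False using to tm im t(2) unfolding term_order_def by meson
qed


locale gbsetup =
  fixes n :: nat and I :: "('k::field) mpoly set" and G :: "'k mpoly set"
    and le :: "(nat \<Rightarrow>\<^sub>0 nat) \<Rightarrow> (nat \<Rightarrow>\<^sub>0 nat) \<Rightarrow> bool"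
  assumes idl: "is_ideal n I" and IM: "I \<subseteq> Mideal n"
    and to: "term_order n le" and gb: "reduced_GB n le I G"
begin

definition gsel :: "nat \<Rightarrow> 'k mpoly" where
  "gsel z = (SOME g. g \<in> G \<and> LT le g = Var z)"

lemma gsel: assumes "z \<in> LI n le G"
  shows "gsel z \<in> G" "LT le (gsel z) = Var z" "z < n"
proof -
  have "\<exists>g. g \<in> G \<and> LT le g = Var z" using assms by (auto simp: LI_def)
  then have "gsel z \<in> G \<and> LT le (gsel z) = Var z" unfolding gsel_def by (rule someI_ex)
  then show "gsel z \<in> G" "LT le (gsel z) = Var z" by auto
  show "z < n" using assms by (auto simp: LI_def)
qed

lemma gsel2: assumes "z \<in> LI n le G"
  shows "gsel z \<in> I" "gsel z \<noteq> 0" "gsel z \<in> Pring n" "gsel z \<in> Mideal n"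
    "lm le (gsel z) = Poly_Mapping.single z 1"
    "Poly_Mapping.lookup (gsel z) (Poly_Mapping.single z 1) = 1"
proof -
  show "gsel z \<in> I" "gsel z \<noteq> 0" using gsel(1)[OF assms] gb by (auto simp: reduced_GB_def)
  then show "gsel z \<in> Mideal n" using IM by auto
  then show "gsel z \<in> Pring n" by (simp add: Mideal_def)
  show "lm le (gsel z) = Poly_Mapping.single z 1" using LT_Var(1)[OF gsel(2)[OF assms]] .
  then show "Poly_Mapping.lookup (gsel z) (Poly_Mapping.single z 1) = 1"
    using LT_Var(2)[OF gsel(2)[OF assms]] by simp
qed

lemma gsel_inj: assumes "z \<in> LI n le G" "z' \<in> LI n le G" "z \<noteq> z'" shows "gsel z \<noteq> gsel z'"
proof
  assume "gsel z = gsel z'"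
  then have "Poly_Mapping.single z (1::nat) = Poly_Mapping.single z' 1" using gsel2(5)[OF assms(1)] gsel2(5)[OF assms(2)] by simp
  then have "Poly_Mapping.lookup (Poly_Mapping.single z (1::nat)) z = Poly_Mapping.lookup (Poly_Mapping.single z' 1) z" by simp
  then show False using assms(3) by (simp add: lookup_single)
qed

lemma no_other_lead: assumes "z \<in> LI n le G" "z' \<in> LI n le G" "z \<noteq> z'"
  shows "Poly_Mapping.single z 1 \<notin> Poly_Mapping.keys (gsel z')"
proof
  assume t: "Poly_Mapping.single z 1 \<in> Poly_Mapping.keys (gsel z')"
  have "mdvd (lm le (gsel z)) (Poly_Mapping.single z 1)" using gsel2(5)[OF assms(1)] by (simp add: mdvd_def)
  moreover have "\<forall>g\<in>G. \<forall>t\<in>Poly_Mapping.keys g. \<forall>g'\<in>G. (g' \<noteq> g \<or> t \<noteq> lm le g) \<longrightarrow> \<not> mdvd (lm le g') t"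
    using gb by (simp add: reduced_GB_def)
  ultimately show False using t gsel(1)[OF assms(1)] gsel(1)[OF assms(2)] gsel_inj[OF assms] by blast
qed

lemma other_var: assumes "z \<in> LI n le G" "z' \<in> LI n le G" "z \<noteq> z'"
  shows "z \<notin> indets (gsel z')"
proof
  assume "z \<in> indets (gsel z')"
  then obtain t where t: "t \<in> Poly_Mapping.keys (gsel z')" "z \<in> Poly_Mapping.keys t" by (auto simp: indets_def)
  have "mdvd (lm le (gsel z)) t" using gsel2(5)[OF assms(1)] mdvd_single[OF t(2)] by simp
  moreover have "\<forall>g\<in>G. \<forall>t\<in>Poly_Mapping.keys g. \<forall>g'\<in>G. (g' \<noteq> g \<or> t \<noteq> lm le g) \<longrightarrow> \<not> mdvd (lm le g') t"
    using gb by (simp add: reduced_GB_def)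
  ultimately show False using t gsel(1)[OF assms(1)] gsel(1)[OF assms(2)] gsel_inj[OF assms] by blast
qed

lemma lookup_Var: "Poly_Mapping.lookup (Var i :: 'k mpoly) t = (if t = Poly_Mapping.single i 1 then 1 else 0)"
  by (simp add: Var_def lookup_single when_def)

lemma sep: assumes "z \<in> LI n le G" shows "separating z (gsel z)"
proof -
  let ?g = "gsel z"
  have tl: "tail z ?g = Var z - ?g"
    unfolding tail_def using gsel2(6)[OF assms] by (simp add: pscale_def)
  have "z \<notin> indets (Var z - ?g)"
  proof
    assume "z \<in> indets (Var z - ?g)"
    then obtain t where t: "t \<in> Poly_Mapping.keys (Var z - ?g)" "z \<in> Poly_Mapping.keys t" by (auto simp: indets_def)
    show False
    proof (cases "t = Poly_Mapping.single z 1")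
      case True
      then show ?thesis using t(1) gsel2(6)[OF assms] by (simp add: in_keys_iff lookup_minus lookup_Var)
    next
      case False
      then have "t \<in> Poly_Mapping.keys ?g" using t(1) by (simp add: in_keys_iff lookup_minus lookup_Var)
      then show ?thesis using lm_var_no_other[OF to gsel2(3,2,5)[OF assms] _ False] t(2) by blast
    qed
  qed
  then show ?thesis unfolding separating_def using tl gsel2(6)[OF assms] by simp
qed

lemma sepdim_bound: "sepdim n I \<le> n - card (LI n le G)"
proof -
  let ?S = "{card Z | Z. Z \<subseteq> {..<n} \<and> (\<exists>f. (\<forall>z\<in>Z. f z \<in> I) \<and> coherently_separating n Z f)}"
  have LIsub: "LI n le G \<subseteq> {..<n}" by (auto simp: LI_def)
  have "coherently_separating n (LI n le G) gsel"
    unfolding coherently_separating_def using LIsub gsel2 sep other_var by blast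
  then have "card (LI n le G) \<in> ?S" using LIsub gsel2(1) by blast
  moreover have "finite ?S"
  proof (rule finite_subset)
    show "?S \<subseteq> {..n}" using card_mono[of "{..<n}"] by fastforce
  qed auto
  ultimately have "card (LI n le G) \<le> Max ?S" by (rule Max_ge[rotated])
  then show ?thesis unfolding sepdim_def by simp
qed

end

context vector_space begin

lemma span_disjoint:
  assumes ind: "independent B" and X: "X \<subseteq> B"
  shows "span (B - X) \<inter> span X \<subseteq> {0}"
proof
  fix x assume x: "x \<in> span (B - X) \<inter> span X"
  obtain t1 r1 where t1: "finite t1" "t1 \<subseteq> B - X" "x = (\<Sum>a\<in>t1. r1 a *s a)"
    using x by (auto simp: span_explicit)
  obtain t2 r2 where t2: "finite t2" "t2 \<subseteq> X" "x = (\<Sum>a\<in>t2. r2 a *s a)"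
    using x by (auto simp: span_explicit)
  define u where "u v = (if v \<in> t1 then r1 v else - r2 v)" for v
  have dis: "t1 \<inter> t2 = {}" using t1 t2 by auto
  have "(\<Sum>v\<in>t1 \<union> t2. u v *s v) = (\<Sum>v\<in>t1. u v *s v) + (\<Sum>v\<in>t2. u v *s v)"
    by (rule sum.union_disjoint) (use t1 t2 dis in auto)
  also have "(\<Sum>v\<in>t1. u v *s v) = x" using t1 by (simp add: u_def)
  also have "(\<Sum>v\<in>t2. u v *s v) = (\<Sum>v\<in>t2. - (r2 v *s v))"
    by (rule sum.cong) (use dis in \<open>auto simp: u_def\<close>)
  also have "\<dots> = - x" by (simp add: sum_negf t2(3))
  finally have s: "(\<Sum>v\<in>t1 \<union> t2. u v *s v) = 0" by simp
  have "\<forall>v\<in>t1. r1 v = 0"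
  proof
    fix v assume v: "v \<in> t1"
    have "u v = 0" by (rule independentD[OF ind _ _ s]) (use t1 t2 v X in auto)
    then show "r1 v = 0" using v by (simp add: u_def)
  qed
  then show "x \<in> {0}" using t1 by simp
qed

lemma indep_union:
  assumes A: "independent A" and B: "independent B" and disj: "span A \<inter> span B \<subseteq> {0}"
  shows "independent (A \<union> B)"
proof
  assume "dependent (A \<union> B)"
  then obtain t u v where t: "finite t" "t \<subseteq> A \<union> B" "(\<Sum>v\<in>t. u v *s v) = 0" "v \<in> t" "u v \<noteq> 0"
    unfolding dependent_explicit by blast
  let ?ta = "t \<inter> A" and ?tb = "t - A"
  have "(\<Sum>v\<in>t. u v *s v) = (\<Sum>v\<in>?ta. u v *s v) + (\<Sum>v\<in>?tb. u v *s v)"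
    using t(1) by (metis (no_types) Int_Diff_Un Int_Diff_disjoint finite_Int finite_Diff sum.union_disjoint)
  then have eq: "(\<Sum>v\<in>?ta. u v *s v) = - (\<Sum>v\<in>?tb. u v *s v)" using t(3) by (simp add: eq_neg_iff_add_eq_0)
  have "(\<Sum>v\<in>?ta. u v *s v) \<in> span A" by (rule span_sum) (auto intro: span_scale span_base)
  moreover have "(\<Sum>v\<in>?tb. u v *s v) \<in> span B" using t(2)
    by (intro span_sum) (auto intro: span_scale span_base)
  then have "- (\<Sum>v\<in>?tb. u v *s v) \<in> span B" by (rule span_neg)
  ultimately have z: "(\<Sum>v\<in>?ta. u v *s v) = 0" using eq disj by auto
  then have z2: "(\<Sum>v\<in>?tb. u v *s v) = 0" using eq by simp
  show False
  proof (cases "v \<in> A")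
    case True
    then show ?thesis using independentD[OF A _ _ z, of v] t by auto
  next
    case False
    then show ?thesis using independentD[OF B _ _ z2, of v] t by auto
  qed
qed

lemma complement_exists:
  assumes W: "subspace W" and M: "subspace M" and WM: "W \<subseteq> M"
  shows "\<exists>C. subspace C \<and> C \<subseteq> M \<and> C \<inter> W = {0} \<and> M = {c + w | c w. c \<in> C \<and> w \<in> W}"
proof -
  obtain BW where BW: "BW \<subseteq> W" "independent BW" "W \<subseteq> span BW"
    using maximal_independent_subset[of W] by blast
  obtain B where B: "BW \<subseteq> B" "B \<subseteq> M" "independent B" "M \<subseteq> span B"
    using maximal_independent_subset_extend[of BW M] BW WM by blast
  have spW: "span BW = W" using BW W by (simp add: span_subspace)
  let ?C = "span (B - BW)"
  have "?C \<subseteq> M" using B M by (metis Diff_subset dual_order.trans span_minimal)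
  moreover have "?C \<inter> W \<subseteq> {0}" using span_disjoint[OF B(3,1)] spW by simp
  then have "?C \<inter> W = {0}" using W span_zero subspace_0 by blast
  moreover have "M = {c + w | c w. c \<in> ?C \<and> w \<in> W}"
  proof
    have eq: "(B - BW) \<union> BW = B" using B(1) by auto
    have "M \<subseteq> {x + y | x y. x \<in> span (B - BW) \<and> y \<in> span BW}" using B(4) eq span_Un[of "B - BW" BW] by simp
    then show "M \<subseteq> {c + w | c w. c \<in> ?C \<and> w \<in> W}" using spW by simp
  next
    show "{c + w | c w. c \<in> ?C \<and> w \<in> W} \<subseteq> M"
      using \<open>?C \<subseteq> M\<close> WM M by (auto intro: subspace_add)
  qed
  ultimately show ?thesis by blast
qed

lemma dim_bound:
  assumes W: "subspace W" and C: "subspace C" and CW: "C \<inter> W \<subseteq> {0}"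
    and sub: "C \<subseteq> span (U \<union> W)" and U: "finite U"
  shows "dim C \<le> card U"
proof -
  obtain B where B: "B \<subseteq> C" "independent B" "C \<subseteq> span B" "card B = dim C"
    using basis_exists by blast
  show ?thesis
  proof (cases "finite B")
    case False
    then show ?thesis using B(4) by simp
  next
    case finB: True
    have spanW: "span W = W" using W by simp
    have "\<forall>b\<in>B. \<exists>w. w \<in> W \<and> b - w \<in> span U"
    proof
      fix b assume "b \<in> B"
      then have "b \<in> span (U \<union> W)" using B(1) sub by auto
      then obtain x y where "b = x + y" "x \<in> span U" "y \<in> W" using span_Un spanW by auto
      then show "\<exists>w. w \<in> W \<and> b - w \<in> span U" by (intro exI[of _ y]) auto
    qed
    then obtain w where w: "\<And>b. b \<in> B \<Longrightarrow> w b \<in> W \<and> b - w b \<in> span U" by metis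
    let ?W' = "w ` B"
    have finW': "finite ?W'" using finB by simp
    obtain BW where BW: "BW \<subseteq> span ?W'" "independent BW" "span ?W' \<subseteq> span BW"
      using maximal_independent_subset[of "span ?W'"] by blast
    have finBW: "finite BW" using independent_span_bound[OF finW' BW(2)] BW(1) by auto
    have W'W: "span ?W' \<subseteq> W" by (rule span_minimal) (use w W in auto)
    have BWW: "BW \<subseteq> W" using BW(1) W'W by auto
    have spB: "span B \<subseteq> C" using B(1) C by (simp add: span_minimal)
    have spBW: "span BW \<subseteq> W" using BWW W by (simp add: span_minimal)
    have ind: "independent (B \<union> BW)"
      by (rule indep_union[OF B(2) BW(2)]) (use spB spBW CW in auto)
    have dis: "B \<inter> BW = {}"
    proof (rule ccontr)
      assume "B \<inter> BW \<noteq> {}"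
      then obtain x where x: "x \<in> B" "x \<in> BW" by auto
      then have "x = 0" using B(1) BWW CW by auto
      then show False using x B(2) dependent_zero by blast
    qed
    have "B \<union> BW \<subseteq> span (U \<union> BW)"
    proof
      fix x assume "x \<in> B \<union> BW"
      then show "x \<in> span (U \<union> BW)"
      proof
        assume x: "x \<in> B"
        have "x - w x \<in> span (U \<union> BW)" using w[OF x] span_mono[of U "U \<union> BW"] by auto
        moreover have "w x \<in> span (U \<union> BW)"
          using BW(3) span_base[of "w x" ?W'] x span_mono[of BW "U \<union> BW"] by auto
        ultimately show ?thesis using span_add by fastforce
      qed (auto intro: span_base)
    qed
    then have "card (B \<union> BW) \<le> card (U \<union> BW)"
      using independent_span_bound[OF _ ind] U finBW by auto
    also have "\<dots> \<le> card U + card BW" by (rule card_Un_le)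
    finally have "card B + card BW \<le> card U + card BW"
      using card_Un_disjoint[OF finB finBW dis] by simp
    then show ?thesis using B(4) by simp
  qed
qed

end

interpretation vs: vector_space "pscale :: 'k::field \<Rightarrow> 'k mpoly \<Rightarrow> 'k mpoly"
  by (rule vs_pscale)

lemma lookup_Lin: "Poly_Mapping.lookup (Lin f) t = (if deg_mon t = 1 then Poly_Mapping.lookup f t else 0)"
proof -
  have "finite {t. (if deg_mon t = 1 then Poly_Mapping.lookup f t else 0) \<noteq> 0}"
    by (rule finite_subset[OF _ finite_keys[of f]]) (auto simp: in_keys_iff split: if_splits)
  then show ?thesis unfolding Lin_def by simp
qed

lemma deg_mon_single[simp]: "deg_mon (Poly_Mapping.single i 1) = 1"
  by (simp add: deg_mon_def)

lemma deg_mon_single'[simp]: "deg_mon (Poly_Mapping.single i (Suc 0)) = Suc 0"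
  by (simp add: deg_mon_def)

lemma deg_mon_one: assumes "deg_mon t = 1" shows "\<exists>j. t = Poly_Mapping.single j 1"
proof -
  have "card (Poly_Mapping.keys t) = (\<Sum>i\<in>Poly_Mapping.keys t. 1)" by simp
  also have "\<dots> \<le> deg_mon t" unfolding deg_mon_def
    by (rule sum_mono) (auto simp: in_keys_iff)
  finally have c: "card (Poly_Mapping.keys t) \<le> 1" using assms by simp
  have "Poly_Mapping.keys t \<noteq> {}" using assms by (auto simp: deg_mon_def)
  then obtain j where kj: "Poly_Mapping.keys t = {j}" using c
    by (metis One_nat_def card_1_singletonE card_0_eq finite_keys le_SucE le_zero_eq)
  then have "Poly_Mapping.lookup t j = 1" using assms by (simp add: deg_mon_def)
  have "t = Poly_Mapping.single j 1"
  proof (rule poly_mapping_eqI)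
    fix k show "Poly_Mapping.lookup t k = Poly_Mapping.lookup (Poly_Mapping.single j 1) k"
    proof (cases "k = j")
      case True then show ?thesis using \<open>Poly_Mapping.lookup t j = 1\<close> by simp
    next
      case False then have "k \<notin> Poly_Mapping.keys t" using kj by auto
      then show ?thesis using False by (simp add: in_keys_iff lookup_single)
    qed
  qed
  then show ?thesis by blast
qed

lemma single_one_eq: "(Poly_Mapping.single i (1::nat) = Poly_Mapping.single j 1) = (i = j)"
proof
  assume "Poly_Mapping.single i (1::nat) = Poly_Mapping.single j 1"
  then have "Poly_Mapping.lookup (Poly_Mapping.single i (1::nat)) i = Poly_Mapping.lookup (Poly_Mapping.single j 1) i" by simp
  then show "i = j" by (simp add: lookup_single when_def split: if_splits)
qed simp

lemma single_one_eq'[simp]: "(Poly_Mapping.single i (Suc 0) = Poly_Mapping.single j (Suc 0)) = (i = j)"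
  using single_one_eq by (simp add: One_nat_def)

lemma lookup_Var': "Poly_Mapping.lookup (Var i :: 'k::comm_ring_1 mpoly) t = (if t = Poly_Mapping.single i 1 then 1 else 0)"
  by (simp add: Var_def lookup_single when_def)

lemma Lin_expand: assumes "f \<in> Pring n"
  shows "Lin (f::'k::field mpoly) = (\<Sum>j<n. pscale (Poly_Mapping.lookup f (Poly_Mapping.single j 1)) (Var j))"
proof (rule poly_mapping_eqI)
  fix t
  have r: "Poly_Mapping.lookup (\<Sum>j<n. pscale (Poly_Mapping.lookup f (Poly_Mapping.single j 1)) (Var j)) t
      = (\<Sum>j<n. if t = Poly_Mapping.single j 1 then Poly_Mapping.lookup f (Poly_Mapping.single j 1) else 0)"
    unfolding lookup_sum by (rule sum.cong) (auto simp: lookup_Var')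
  show "Poly_Mapping.lookup (Lin f) t = Poly_Mapping.lookup (\<Sum>j<n. pscale (Poly_Mapping.lookup f (Poly_Mapping.single j 1)) (Var j)) t"
  proof (cases "deg_mon t = 1")
    case True
    then obtain j0 where t: "t = Poly_Mapping.single j0 1" using deg_mon_one by blast
    have s: "(\<Sum>j<n. if t = Poly_Mapping.single j 1 then Poly_Mapping.lookup f (Poly_Mapping.single j 1) else 0)
        = (\<Sum>j<n. if j0 = j then Poly_Mapping.lookup f t else 0)"
      by (rule sum.cong) (auto simp: t single_one_eq)
    show ?thesis
    proof (cases "j0 < n")
      case True then show ?thesis using s r t by (simp add: lookup_Lin)
    next
      case False
      have "Poly_Mapping.lookup f t = 0"
      proof (rule ccontr)
        assume "Poly_Mapping.lookup f t \<noteq> 0"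
        then have "t \<in> Poly_Mapping.keys f" by (simp add: in_keys_iff)
        moreover have "j0 \<in> Poly_Mapping.keys t" unfolding t by simp
        ultimately have "j0 \<in> indets f" unfolding indets_def by blast
        then show False using assms False by (auto simp: Pring_def)
      qed
      then show ?thesis using s r t False by (simp add: lookup_Lin)
    qed
  next
    case False
    then have "(\<Sum>j<n. if t = Poly_Mapping.single j 1 then Poly_Mapping.lookup f (Poly_Mapping.single j 1) else 0) = 0"
      by (intro sum.neutral) auto
    then show ?thesis using r False by (simp add: lookup_Lin)
  qed
qed

lemma Lin_span: "f \<in> Pring n \<Longrightarrow> Lin (f::'k::field mpoly) \<in> vs.span (Var ` {..<n})"
  apply (subst Lin_expand[of f n], assumption)
  apply (rule vs.span_sum)
  apply (rule vs.span_scale)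
  apply (rule vs.span_base)
  by auto

context gbsetup begin

lemma Lin_coeff: assumes "z \<in> LI n le G" "k \<in> LI n le G"
  shows "Poly_Mapping.lookup (Lin (gsel z)) (Poly_Mapping.single k 1) = (if k = z then 1 else 0)"
  using gsel2(6)[OF assms(1)] no_other_lead[OF assms(2,1)] by (auto simp: lookup_Lin in_keys_iff)

lemma partA: "card (LI n le G) \<le> kdim (LinI I)"
proof -
  let ?L = "\<lambda>z. Lin (gsel z)"
  let ?B = "?L ` LI n le G"
  have finLI: "finite (LI n le G)" by (rule finite_subset[of _ "{..<n}"]) (auto simp: LI_def)
  have inj: "inj_on ?L (LI n le G)"
  proof (rule inj_onI)
    fix z z' assume z: "z \<in> LI n le G" "z' \<in> LI n le G" "?L z = ?L z'"
    then have "Poly_Mapping.lookup (?L z) (Poly_Mapping.single z 1) = Poly_Mapping.lookup (?L z') (Poly_Mapping.single z 1)" by simp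
    then show "z = z'" using Lin_coeff[OF z(1) z(1)] Lin_coeff[OF z(2) z(1)] by (auto split: if_splits)
  qed
  have ind: "vs.independent ?B"
  proof (rule vs.independent_if_scalars_zero)
    show "finite ?B" using finLI by simp
  next
    fix f x assume s: "(\<Sum>x\<in>?B. pscale (f x) x) = 0" and x: "x \<in> ?B"
    then obtain z where z: "z \<in> LI n le G" "x = ?L z" by auto
    have "0 = Poly_Mapping.lookup (\<Sum>x\<in>?B. pscale (f x) x) (Poly_Mapping.single z 1)" using s by simp
    also have "\<dots> = (\<Sum>k\<in>LI n le G. f (?L k) * Poly_Mapping.lookup (?L k) (Poly_Mapping.single z 1))"
      by (simp add: lookup_sum sum.reindex[OF inj])
    also have "\<dots> = (\<Sum>k\<in>LI n le G. if k = z then f (?L k) else 0)"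
      by (rule sum.cong) (use Lin_coeff z(1) in \<open>auto simp: One_nat_def\<close>)
    also have "\<dots> = f (?L z)" using finLI z(1) by simp
    finally show "f x = 0" using z by simp
  qed
  have BV: "?B \<subseteq> LinI I" unfolding LinI_def using gsel2(1) by (auto intro: vs.span_base)
  obtain A where A: "A \<subseteq> LinI I" "vs.independent A" "LinI I \<subseteq> vs.span A" "card A = vs.dim (LinI I)"
    using vs.basis_exists by blast
  have "LinI I \<subseteq> vs.span (Var ` {..<n})" unfolding LinI_def
    by (rule vs.span_minimal) (use Lin_span idl in \<open>auto simp: is_ideal_def\<close>)
  then have "finite A" using vs.independent_span_bound[of "Var ` {..<n}" A] A by auto
  then have "card ?B \<le> card A" using vs.independent_span_bound[OF _ ind] A BV by blast
  then show ?thesis using A(4) inj card_image by (simp add: kdim_def card_image[OF inj])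
qed

end

context fixes n :: nat and I :: "'k::comm_ring_1 mpoly set" assumes idl: "is_ideal n I"
begin
lemma ideal_Pring: "a \<in> I \<Longrightarrow> a \<in> Pring n" using idl by (auto simp: is_ideal_def)
lemma ideal_0: "0 \<in> I" using idl by (auto simp: is_ideal_def)
lemma ideal_add: "a \<in> I \<Longrightarrow> b \<in> I \<Longrightarrow> a + b \<in> I" using idl by (auto simp: is_ideal_def)
lemma ideal_mult: "f \<in> Pring n \<Longrightarrow> a \<in> I \<Longrightarrow> f * a \<in> I" using idl by (auto simp: is_ideal_def)
lemma ideal_mult': "f \<in> Pring n \<Longrightarrow> a \<in> I \<Longrightarrow> a * f \<in> I" by (metis ideal_mult mult.commute)
lemma ideal_uminus: "a \<in> I \<Longrightarrow> - a \<in> I"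
  using ideal_mult[OF Pring_Const[of "-1"]] by (simp add: Const_uminus)
lemma ideal_diff: "a \<in> I \<Longrightarrow> b \<in> I \<Longrightarrow> a - b \<in> I"
  using ideal_add[OF _ ideal_uminus] by (metis diff_conv_add_uminus)
lemma ideal_sum: "(\<And>x. x \<in> A \<Longrightarrow> g x \<in> I) \<Longrightarrow> sum g A \<in> I"
  by (rule closed_sum) (auto intro: ideal_add ideal_0)

lemma prod_diff_ideal:
  assumes "\<And>i. i \<in> A \<Longrightarrow> a i \<in> Pring n \<and> b i \<in> Pring n \<and> a i - b i \<in> I"
  shows "prod a A - prod b A \<in> I"
  using assms
proof (induction A rule: infinite_finite_induct)
  case (insert x F)
  have P: "prod a F \<in> Pring n" "prod b F \<in> Pring n" using insert by (auto intro: Pring_prod)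
  have "prod a (insert x F) - prod b (insert x F) = a x * (prod a F - prod b F) + prod b F * (a x - b x)"
    using insert by (simp add: algebra_simps)
  also have "\<dots> \<in> I" using insert P by (intro ideal_add ideal_mult) auto
  finally show ?case .
qed (auto intro: ideal_0)

lemma power_diff_ideal:
  assumes "a \<in> Pring n" "b \<in> Pring n" "a - b \<in> I"
  shows "a ^ k - b ^ k \<in> I"
proof (induction k)
  case 0 then show ?case using ideal_0 by simp
next
  case (Suc k)
  have "a ^ Suc k - b ^ Suc k = a * (a ^ k - b ^ k) + b ^ k * (a - b)" by (simp add: algebra_simps)
  also have "\<dots> \<in> I" using Suc assms by (intro ideal_add ideal_mult Pring_power) auto
  finally show ?case .
qed

lemma subst_diff_ideal:
  assumes "\<And>i. i \<in> indets p \<Longrightarrow> \<sigma> i \<in> Pring n \<and> \<sigma>' i \<in> Pring n \<and> \<sigma> i - \<sigma>' i \<in> I"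
  shows "subst \<sigma> p - subst \<sigma>' p \<in> I"
proof -
  have "subst \<sigma> p - subst \<sigma>' p = (\<Sum>t\<in>Poly_Mapping.keys p. Const (Poly_Mapping.lookup p t) * (monval \<sigma> t - monval \<sigma>' t))"
    by (simp add: subst_def sum_subtractf[symmetric] right_diff_distrib)
  also have "\<dots> \<in> I"
  proof (rule ideal_sum, rule ideal_mult[OF Pring_Const])
    fix t assume t: "t \<in> Poly_Mapping.keys p"
    have kt: "i \<in> indets p" if "i \<in> Poly_Mapping.keys t" for i using t that by (auto simp: indets_def)
    show "monval \<sigma> t - monval \<sigma>' t \<in> I" unfolding monval_def
      by (rule prod_diff_ideal) (use assms kt in \<open>auto intro: Pring_power power_diff_ideal\<close>)
  qed
  finally show ?thesis .
qed
end

lemma monval_zero: "monval (\<lambda>_. 0 :: 'k::comm_ring_1 mpoly) t = (if t = 0 then 1 else 0)"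
proof (cases "t = 0")
  case False
  have "\<exists>i. i \<in> Poly_Mapping.keys t"
  proof (rule ccontr)
    assume "\<not> (\<exists>i. i \<in> Poly_Mapping.keys t)"
    then have "t = 0" by (intro poly_mapping_eqI) (auto simp: in_keys_iff)
    with False show False by simp
  qed
  then obtain i where i: "i \<in> Poly_Mapping.keys t" by blast
  then have "(0::'k mpoly) ^ Poly_Mapping.lookup t i = 0" by (simp add: in_keys_iff zero_power)
  then show ?thesis unfolding monval_def using i False by (auto intro: prod_zero)
qed (simp)

lemma subst_zero: "subst (\<lambda>_. 0) p = Const (Poly_Mapping.lookup (p::'k::comm_ring_1 mpoly) 0)"
proof -
  have "subst (\<lambda>_. 0) p = (\<Sum>t\<in>insert 0 (Poly_Mapping.keys p). Const (Poly_Mapping.lookup p t) * monval (\<lambda>_. 0) t)"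
    by (rule subst_superset) auto
  also have "\<dots> = (\<Sum>t\<in>insert 0 (Poly_Mapping.keys p). if t = 0 then Const (Poly_Mapping.lookup p t) else 0)"
    by (rule sum.cong) (auto simp: monval_zero)
  also have "\<dots> = Const (Poly_Mapping.lookup p 0)" by simp
  finally show ?thesis .
qed

lemma lookup_mult_zero: "Poly_Mapping.lookup (p * q) 0 = Poly_Mapping.lookup p 0 * Poly_Mapping.lookup (q::'k::comm_ring_1 mpoly) 0"
proof -
  have "Const (Poly_Mapping.lookup (p * q) 0) = Const (Poly_Mapping.lookup p 0 * Poly_Mapping.lookup q 0)"
    using subst_mult[of "\<lambda>_. 0" p q] by (simp add: subst_zero Const_mult)
  then show ?thesis using lookup_Const[of _ 0] by metis
qed

lemma Mideal_Pring: "a \<in> Mideal n \<Longrightarrow> a \<in> Pring n" by (simp add: Mideal_def)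
lemma Mideal_add: "a \<in> Mideal n \<Longrightarrow> b \<in> Mideal n \<Longrightarrow> a + b \<in> Mideal n"
  by (simp add: Mideal_def Pring_add lookup_add)
lemma Mideal_mult: "a \<in> Mideal n \<Longrightarrow> b \<in> Pring n \<Longrightarrow> a * b \<in> Mideal n"
  by (simp add: Mideal_def Pring_mult lookup_mult_zero)
lemma Mideal_mult': "a \<in> Mideal n \<Longrightarrow> b \<in> Pring n \<Longrightarrow> b * a \<in> Mideal n"
  by (simp add: Mideal_def Pring_mult lookup_mult_zero)
lemma Mideal_pscale: "a \<in> Mideal n \<Longrightarrow> pscale c a \<in> Mideal n"
  by (simp add: Mideal_def Pring_pscale)
lemma Mideal_0[simp]: "0 \<in> Mideal n" by (simp add: Mideal_def)
lemma Mideal_diff: "a \<in> Mideal n \<Longrightarrow> b \<in> Mideal n \<Longrightarrow> a - b \<in> Mideal n"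
  by (simp add: Mideal_def Pring_diff lookup_minus)
lemma single_nz: "Poly_Mapping.single i (1::nat) \<noteq> 0"
  by (metis lookup_single_eq lookup_zero one_neq_zero)
lemma Var_Mideal: "i < n \<Longrightarrow> Var i \<in> Mideal n"
  unfolding Mideal_def using Pring_Var[of i n] single_nz[of i] by (simp add: lookup_Var')
lemma Mideal_subspace: "vs.subspace (Mideal n :: 'k::field mpoly set)"
  unfolding vs.subspace_def by (auto intro: Mideal_add Mideal_pscale)
lemma Mideal_sum: "(\<And>x. x \<in> A \<Longrightarrow> g x \<in> Mideal n) \<Longrightarrow> sum g A \<in> Mideal n"
  by (rule closed_sum) (auto intro: Mideal_add)

lemma indets_tail: "indets (tail i f) \<subseteq> {i} \<union> indets (f::'k::field mpoly)"
  unfolding tail_def pscale_def using indets_diff indets_Var indets_mult indets_Const by fastforce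



lemma partC_iso:
  fixes I :: "'k::field mpoly set"
  assumes idl: "is_ideal n I" and Z: "Z \<subseteq> {..<n}" and fI: "\<forall>z\<in>Z. f z \<in> I"
    and cs: "coherently_separating n Z f"
  shows "\<exists>J. is_ideal (n - card Z) J \<and> quot_iso n I (n - card Z) J"
proof -
  define R where "R = {..<n} - Z"
  define m where "m = n - card Z"
  have finZ: "finite Z" using Z finite_subset by blast
  have cR: "card R = m" unfolding R_def m_def using Z finZ by (simp add: card_Diff_subset)
  obtain r where r: "bij_betw r R {..<m}"
    using ex_bij_betw_finite_nat[of R] cR unfolding R_def by (auto simp: atLeast0LessThan)
  define rinv where "rinv = the_inv_into R r"
  have rinv: "bij_betw rinv {..<m} R" unfolding rinv_def using bij_betw_the_inv_into[OF r] .
  have rr: "\<And>i. i \<in> R \<Longrightarrow> rinv (r i) = i" unfolding rinv_def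
    using r by (simp add: bij_betw_def the_inv_into_f_f)
  have rr': "\<And>j. j < m \<Longrightarrow> r (rinv j) = j" unfolding rinv_def
    using r by (simp add: bij_betw_def f_the_inv_into_f)
  have rR: "\<And>i. i \<in> R \<Longrightarrow> r i < m" using r by (auto simp: bij_betw_def)
  have rinvR: "\<And>j. j < m \<Longrightarrow> rinv j \<in> R" using rinv by (auto simp: bij_betw_def)
  have Rn: "R \<subseteq> {..<n}" unfolding R_def by auto
  define \<sigma> where "\<sigma> i = (if i \<in> Z then tail i (f i) else Var i)" for i
  define \<rho> :: "nat \<Rightarrow> 'k mpoly" where "\<rho> i = Var (r i)" for i
  define \<rho>' :: "nat \<Rightarrow> 'k mpoly" where "\<rho>' j = Var (rinv j)" for j
  define \<phi> where "\<phi> p = subst \<rho> (subst \<sigma> p)" for p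
  have cs': "\<And>z. z \<in> Z \<Longrightarrow> f z \<in> Mideal n \<and> separating z (f z) \<and> (\<forall>z'\<in>Z. z' \<noteq> z \<longrightarrow> z \<notin> indets (f z'))"
    using cs unfolding coherently_separating_def by blast
  have F1: "indets (\<sigma> i) \<subseteq> R" if i: "i < n" for i
  proof (cases "i \<in> Z")
    case True
    have fP: "indets (f i) \<subseteq> {..<n}" using cs'[OF True] by (auto simp: Mideal_def Pring_def)
    show ?thesis
    proof
      fix x assume x: "x \<in> indets (\<sigma> i)"
      then have x': "x \<in> {i} \<union> indets (f i)" using indets_tail True \<sigma>_def by auto
      have "x \<noteq> i" using x cs'[OF True] True by (auto simp: \<sigma>_def separating_def)
      moreover have "x \<notin> Z"
      proof
        assume "x \<in> Z"
        then show False using cs'[of x] True x' \<open>x \<noteq> i\<close> by auto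
      qed
      ultimately show "x \<in> R" using x' fP i unfolding R_def by auto
    qed
  next
    case False
    then show ?thesis using i indets_Var[of i] by (auto simp: \<sigma>_def R_def)
  qed
  have F2: "indets (subst \<sigma> p) \<subseteq> R" if "p \<in> Pring n" for p
  proof -
    have "\<forall>i\<in>indets p. indets (\<sigma> i) \<subseteq> R" using F1 that unfolding Pring_def by blast
    then show ?thesis using indets_subst[of \<sigma> p] by blast
  qed
  have F3: "indets (subst \<rho> q) \<subseteq> {..<m}" if "indets q \<subseteq> R" for q
  proof -
    have "\<forall>i\<in>indets q. indets (\<rho> i) \<subseteq> {..<m}"
    proof
      fix i assume "i \<in> indets q"
      then have "r i < m" using rR that by blast
      then show "indets (\<rho> i) \<subseteq> {..<m}" using indets_Var[of "r i"] unfolding \<rho>_def by auto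
    qed
    then show ?thesis using indets_subst[of \<rho> q] by blast
  qed
  have F4: "subst \<rho>' (subst \<rho> q) = q" if "indets q \<subseteq> R" for q
  proof -
    have "subst \<rho>' (subst \<rho> q) = subst (\<lambda>i. Var (rinv (r i))) q"
      by (simp add: subst_subst \<rho>_def \<rho>'_def)
    also have "\<dots> = subst Var q" by (rule subst_cong) (use that rr in auto)
    finally show ?thesis by simp
  qed
  have F5: "subst \<rho>' q \<in> Pring n \<and> \<phi> (subst \<rho>' q) = q" if q: "q \<in> Pring m" for q
  proof
    show "subst \<rho>' q \<in> Pring n"
    proof (rule Pring_subst)
      fix j assume "j \<in> indets q"
      then have "j < m" using q by (auto simp: Pring_def)
      then have "rinv j < n" using rinvR Rn by auto
      then show "\<rho>' j \<in> Pring n" unfolding \<rho>'_def by (rule Pring_Var)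
    qed
    have "subst \<sigma> (subst \<rho>' q) = subst (\<lambda>j. \<sigma> (rinv j)) q" by (simp add: subst_subst \<rho>'_def)
    also have "\<dots> = subst \<rho>' q"
      by (rule subst_cong) (use q rinvR in \<open>auto simp: Pring_def \<sigma>_def \<rho>'_def R_def\<close>)
    finally have "\<phi> (subst \<rho>' q) = subst \<rho> (subst \<rho>' q)" by (simp add: \<phi>_def)
    also have "\<dots> = subst (\<lambda>j. Var (r (rinv j))) q" by (simp add: subst_subst \<rho>_def \<rho>'_def)
    also have "\<dots> = subst Var q" by (rule subst_cong) (use q rr' in \<open>auto simp: Pring_def\<close>)
    finally show "\<phi> (subst \<rho>' q) = q" by simp
  qed
  have F6: "\<phi> p \<in> Pring m" if "p \<in> Pring n" for p
    using F3[OF F2[OF that]] by (simp add: \<phi>_def Pring_def)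
  have hom: "kalg_hom n m \<phi>"
    unfolding kalg_hom_def using F6 by (auto simp: \<phi>_def subst_add subst_mult)
  have F8: "p - subst \<sigma> p \<in> I" if p: "p \<in> Pring n" for p
  proof -
    have "subst Var p - subst \<sigma> p \<in> I"
    proof (rule subst_diff_ideal[OF idl])
      fix i assume i: "i \<in> indets p"
      then have i': "i < n" using p by (auto simp: Pring_def)
      have "\<sigma> i \<in> Pring n" using F1[OF i'] Rn by (auto simp: Pring_def)
      moreover have "Var i - \<sigma> i \<in> I"
      proof (cases "i \<in> Z")
        case True
        have "Var i - \<sigma> i = Const (inverse (Poly_Mapping.lookup (f i) (Poly_Mapping.single i 1))) * f i"
          using True by (simp add: \<sigma>_def tail_def pscale_def)
        then show ?thesis using True fI by (simp add: ideal_mult[OF idl])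
      next
        case False then show ?thesis by (simp add: \<sigma>_def ideal_0[OF idl])
      qed
      ultimately show "Var i \<in> Pring n \<and> \<sigma> i \<in> Pring n \<and> Var i - \<sigma> i \<in> I" using Pring_Var[OF i'] by auto
    qed
    then show ?thesis by simp
  qed
  define J where "J = \<phi> ` I"
  have IP: "I \<subseteq> Pring n" using ideal_Pring[OF idl] by blast
  have phi_add: "\<phi> (a + b) = \<phi> a + \<phi> b" for a b by (simp add: \<phi>_def subst_add)
  have phi_mult: "\<phi> (a * b) = \<phi> a * \<phi> b" for a b by (simp add: \<phi>_def subst_mult)
  have Jideal: "is_ideal m J" unfolding is_ideal_def
  proof (intro conjI ballI)
    show "J \<subseteq> Pring m" using F6 IP by (auto simp: J_def)
    show "0 \<in> J" using ideal_0[OF idl] by (force simp: J_def \<phi>_def)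
  next
    fix a b assume "a \<in> J" "b \<in> J"
    then show "a + b \<in> J" using ideal_add[OF idl] by (auto simp: J_def phi_add[symmetric])
  next
    fix a g :: "'k mpoly" assume a: "a \<in> J" and g: "g \<in> Pring m"
    then obtain b where b: "b \<in> I" "a = \<phi> b" by (auto simp: J_def)
    have "g * a = \<phi> (subst \<rho>' g * b)" using F5[OF g] b by (simp add: phi_mult)
    moreover have "subst \<rho>' g * b \<in> I" using F5[OF g] b ideal_mult[OF idl] by blast
    ultimately show "g * a \<in> J" by (auto simp: J_def)
  qed
  have ker: "{p \<in> Pring n. \<phi> p \<in> J} = I"
  proof
    show "I \<subseteq> {p \<in> Pring n. \<phi> p \<in> J}" using IP by (auto simp: J_def)
  next
    show "{p \<in> Pring n. \<phi> p \<in> J} \<subseteq> I"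
    proof clarify
      fix p assume p: "p \<in> Pring n" "\<phi> p \<in> J"
      then obtain b where b: "b \<in> I" "\<phi> p = \<phi> b" by (auto simp: J_def)
      have bP: "b \<in> Pring n" using b IP by auto
      have "subst \<sigma> p = subst \<sigma> b"
        using F4[OF F2[OF p(1)]] F4[OF F2[OF bP]] b(2) by (metis \<phi>_def)
      then have "p = ((p - subst \<sigma> p) - (b - subst \<sigma> b)) + b" by simp
      also have "\<dots> \<in> I" by (rule ideal_add[OF idl ideal_diff[OF idl F8[OF p(1)] F8[OF bP]] b(1)])
      finally show "p \<in> I" .
    qed
  qed
  have "quot_iso n I m J"
    unfolding quot_iso_def
  proof (intro exI conjI ballI)
    show "kalg_hom n m \<phi>" by (rule hom)
    show "{f \<in> Pring n. \<phi> f \<in> J} = I" by (rule ker)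
  next
    fix q :: "'k mpoly" assume q: "q \<in> Pring m"
    show "\<exists>f\<in>Pring n. q - \<phi> f \<in> J"
      using F5[OF q] Jideal by (intro bexI[of _ "subst \<rho>' q"]) (auto simp: is_ideal_def)
  qed
  then show ?thesis using Jideal m_def by blast
qed

lemma edim_le_sepdim:
  fixes I :: "'k::field mpoly set"
  assumes idl: "is_ideal n I"
  shows "edim n I \<le> sepdim n I"
proof -
  let ?S = "{card Z | Z. Z \<subseteq> {..<n} \<and> (\<exists>f. (\<forall>z\<in>Z. f z \<in> I) \<and> coherently_separating n Z (f :: nat \<Rightarrow> 'k mpoly))}"
  have fin: "finite ?S"
    by (rule finite_subset[of _ "{..n}"]) (use card_mono[of "{..<n}"] in fastforce)+
  have "0 \<in> ?S" by (auto simp: coherently_separating_def intro!: exI[of _ "{}"])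
  then have "Max ?S \<in> ?S" using fin Max_in by blast
  then obtain Z f where Zf: "Max ?S = card Z" "Z \<subseteq> {..<n}" "\<forall>z\<in>Z. f z \<in> I" "coherently_separating n Z f"
    by auto
  obtain J where "is_ideal (n - card Z) J" "quot_iso n I (n - card Z) J"
    using partC_iso[OF idl Zf(2-4)] by blast
  then have "edim n I \<le> n - card Z" unfolding edim_def by (auto intro: Least_le)
  then show ?thesis unfolding sepdim_def using Zf(1) by simp
qed


lemma sum_split_lessThan: "(\<Sum>i<(k1::nat)+k2. f i) = (\<Sum>i<k1. f i) + (\<Sum>i<k2. f (k1 + i))"
  by (induction k2) (simp_all add: add.assoc)

lemma ideal_prod_add:
  assumes x: "x \<in> ideal_prod A B" and y: "y \<in> ideal_prod A B"
  shows "x + y \<in> ideal_prod A B"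
proof -
  obtain a1 b1 and k1 :: nat where 1: "x = (\<Sum>i<k1. a1 i * b1 i)" "\<forall>i<k1. a1 i \<in> A \<and> b1 i \<in> B"
    using x by (auto simp: ideal_prod_def)
  obtain a2 b2 and k2 :: nat where 2: "y = (\<Sum>i<k2. a2 i * b2 i)" "\<forall>i<k2. a2 i \<in> A \<and> b2 i \<in> B"
    using y by (auto simp: ideal_prod_def)
  define a where "a i = (if i < k1 then a1 i else a2 (i - k1))" for i
  define b where "b i = (if i < k1 then b1 i else b2 (i - k1))" for i
  have "(\<Sum>i<k1+k2. a i * b i) = (\<Sum>i<k1. a i * b i) + (\<Sum>i<k2. a (k1+i) * b (k1+i))"
    by (rule sum_split_lessThan)
  also have "\<dots> = x + y" using 1 2 by (simp add: a_def b_def)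
  finally have "x + y = (\<Sum>i<k1+k2. a i * b i)" by simp
  moreover have "\<forall>i<k1+k2. a i \<in> A \<and> b i \<in> B" using 1 2 by (auto simp: a_def b_def)
  ultimately show ?thesis unfolding ideal_prod_def by blast
qed

lemma ideal_prod_single: "a \<in> A \<Longrightarrow> b \<in> B \<Longrightarrow> a * b \<in> ideal_prod A B"
  unfolding ideal_prod_def by (rule CollectI, rule exI[of _ "\<lambda>_. a"], rule exI[of _ "\<lambda>_. b"], rule exI[of _ 1]) simp

lemma ideal_prod_0: "0 \<in> ideal_prod A B"
  unfolding ideal_prod_def by (rule CollectI, rule exI[of _ "\<lambda>_. 0"], rule exI[of _ "\<lambda>_. 0"], rule exI[of _ 0]) simp

lemma M2_pscale: assumes "x \<in> ideal_prod (Mideal n) (Mideal n)"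
  shows "pscale c x \<in> ideal_prod (Mideal n) (Mideal n)"
proof -
  obtain a b and k :: nat where 1: "x = (\<Sum>i<k. a i * b i)" "\<forall>i<k. a i \<in> Mideal n \<and> b i \<in> Mideal n"
    using assms by (auto simp: ideal_prod_def)
  have "pscale c x = (\<Sum>i<k. pscale c (a i) * b i)" using 1 by (simp add: pscale_def sum_distrib_left mult.assoc)
  moreover have "\<forall>i<k. pscale c (a i) \<in> Mideal n \<and> b i \<in> Mideal n" using 1 by (auto intro: Mideal_pscale)
  ultimately show ?thesis unfolding ideal_prod_def
    by (intro CollectI exI[of _ "\<lambda>i. pscale c (a i)"] exI[of _ b] exI[of _ k]) simp
qed

lemma M2_sub_M: "ideal_prod (Mideal n) (Mideal n) \<subseteq> Mideal n"
  unfolding ideal_prod_def by (auto intro!: Mideal_sum Mideal_mult Mideal_Pring)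

lemma single_minus_decomp: assumes "j \<in> Poly_Mapping.keys t"
  shows "t = Poly_Mapping.single j 1 + (t - Poly_Mapping.single j (1::nat))"
  using assms by (auto intro!: poly_mapping_eqI simp: lookup_add lookup_minus lookup_single when_def in_keys_iff)

lemma M_span: assumes p: "p \<in> Mideal n"
  shows "p \<in> vs.span (Var ` {..<n} \<union> ideal_prod (Mideal n) (Mideal (n::nat)))"
proof -
  let ?T = "vs.span (Var ` {..<n} \<union> ideal_prod (Mideal n) (Mideal n))"
  have pP: "p \<in> Pring n" and p0: "Poly_Mapping.lookup p 0 = 0" using p by (auto simp: Mideal_def)
  have "(\<Sum>t\<in>Poly_Mapping.keys p. Poly_Mapping.single t (Poly_Mapping.lookup p t)) \<in> ?T"
  proof (rule vs.span_sum)
    fix t assume t: "t \<in> Poly_Mapping.keys p"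
    let ?c = "Poly_Mapping.lookup p t"
    have t0: "t \<noteq> 0" using t p0 by (auto simp: in_keys_iff)
    have kt: "Poly_Mapping.keys t \<subseteq> {..<n}" using t pP by (auto simp: Pring_def indets_def)
    show "Poly_Mapping.single t ?c \<in> ?T"
    proof (cases "deg_mon t = 1")
      case True
      then obtain j where tj: "t = Poly_Mapping.single j 1" using deg_mon_one by blast
      then have "j < n" using kt by auto
      have "Poly_Mapping.single t ?c = pscale ?c (Var j)"
        unfolding tj pscale_def Var_def Const_def by (simp add: mult_single)
      also have "\<dots> \<in> ?T" using \<open>j < n\<close> by (intro vs.span_scale vs.span_base) auto
      finally show ?thesis .
    next
      case False
      obtain j where j: "j \<in> Poly_Mapping.keys t" using t0
        by (metis all_not_in_conv lookup_zero in_keys_iff poly_mapping_eqI)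
      define t' where "t' = t - Poly_Mapping.single j 1"
      have tt: "t = Poly_Mapping.single j 1 + t'" using single_minus_decomp[OF j] by (simp add: t'_def)
      have t'0: "t' \<noteq> 0" using False tt by auto
      have jn: "j < n" using j kt by auto
      have "Poly_Mapping.single t ?c = Var j * Poly_Mapping.single t' ?c"
        unfolding Var_def by (simp add: mult_single tt)
      moreover have "Poly_Mapping.single t' ?c \<in> Mideal n"
      proof -
        have "Poly_Mapping.keys t' \<subseteq> Poly_Mapping.keys t" using tt by (auto simp: keys_add_nat)
        then have "Poly_Mapping.single t' ?c \<in> Pring n" using kt indets_single[of t' ?c] by (auto simp: Pring_def)
        then show ?thesis using t'0 by (simp add: Mideal_def lookup_single)
      qed
      ultimately have "Poly_Mapping.single t ?c \<in> ideal_prod (Mideal n) (Mideal n)"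
        using Var_Mideal[OF jn] ideal_prod_single by metis
      then show ?thesis by (intro vs.span_base) auto
    qed
  qed
  then show ?thesis using poly_expand[of p] by simp
qed


context
  fixes n :: nat and I :: "'k::field mpoly set"
  assumes idl: "is_ideal n I" and IM: "I \<subseteq> Mideal n"
begin

definition "M2 = ideal_prod (Mideal n) (Mideal n :: 'k mpoly set)"
definition "Wsp = {a + b | a b. a \<in> M2 \<and> b \<in> I}"

lemma W_subspace: "vs.subspace Wsp"
  unfolding vs.subspace_def
proof (intro conjI ballI allI)
  show "0 \<in> Wsp" unfolding Wsp_def M2_def using ideal_prod_0 ideal_0[OF idl] by force
next
  fix x y assume "x \<in> Wsp" "y \<in> Wsp"
  then obtain a1 b1 a2 b2 where "x = a1 + b1" "a1 \<in> M2" "b1 \<in> I" "y = a2 + b2" "a2 \<in> M2" "b2 \<in> I"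
    unfolding Wsp_def by blast
  then have "x + y = (a1 + a2) + (b1 + b2)" "a1 + a2 \<in> M2" "b1 + b2 \<in> I"
    using ideal_prod_add ideal_add[OF idl] unfolding M2_def by (auto simp: algebra_simps)
  then show "x + y \<in> Wsp" unfolding Wsp_def by blast
next
  fix c and x assume "x \<in> Wsp"
  then obtain a b where "x = a + b" "a \<in> M2" "b \<in> I" unfolding Wsp_def by blast
  then have "pscale c x = pscale c a + pscale c b" "pscale c a \<in> M2" "pscale c b \<in> I"
    using M2_pscale ideal_mult[OF idl Pring_Const] unfolding M2_def pscale_def by (auto simp: algebra_simps)
  then show "pscale c x \<in> Wsp" unfolding Wsp_def by blast
qed

lemma M2_W: "M2 \<subseteq> Wsp" unfolding Wsp_def using ideal_0[OF idl] by force
lemma I_W: "I \<subseteq> Wsp" unfolding Wsp_def M2_def using ideal_prod_0 by force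
lemma W_M: "Wsp \<subseteq> Mideal n" unfolding Wsp_def M2_def using M2_sub_M IM by (auto intro: Mideal_add)

lemma cotdim_eq: "\<exists>C. vs.subspace C \<and> C \<subseteq> Mideal n \<and> C \<inter> Wsp = {0} \<and> cotdim n I = kdim C"
proof -
  let ?P = "\<lambda>C. vs.subspace C \<and> C \<subseteq> Mideal n \<and> C \<inter> Wsp = {0} \<and> Mideal n = {c + w | c w. c \<in> C \<and> w \<in> Wsp}"
  have ex: "\<exists>C. ?P C" by (rule vector_space.complement_exists[OF vs_pscale W_subspace Mideal_subspace W_M])
  have eq: "cotdim n I = kdim (SOME C. ?P C)"
    unfolding cotdim_def qdim_def Wsp_def M2_def by simp
  show ?thesis using someI_ex[OF ex] eq by blast
qed

lemma cotdim_le: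
  assumes J: "is_ideal m J" and iso: "quot_iso n I m J"
  shows "cotdim n I \<le> m"
proof -
  obtain \<phi> where hom: "kalg_hom n m \<phi>" and ker: "{f \<in> Pring n. \<phi> f \<in> J} = I"
    and surj: "\<forall>q\<in>Pring m. \<exists>f\<in>Pring n. q - \<phi> f \<in> J"
    using iso unfolding quot_iso_def by blast
  have phiP: "\<And>f. f \<in> Pring n \<Longrightarrow> \<phi> f \<in> Pring m" using hom unfolding kalg_hom_def by blast
  have phiadd: "\<And>f g. f \<in> Pring n \<Longrightarrow> g \<in> Pring n \<Longrightarrow> \<phi> (f + g) = \<phi> f + \<phi> g"
    using hom unfolding kalg_hom_def by blast
  have phimult: "\<And>f g. f \<in> Pring n \<Longrightarrow> g \<in> Pring n \<Longrightarrow> \<phi> (f * g) = \<phi> f * \<phi> g"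
    using hom unfolding kalg_hom_def by blast
  have phiconst: "\<And>c. \<phi> (Const c) = Const c" using hom unfolding kalg_hom_def by blast
  have phidiff: "\<phi> (f - g) = \<phi> f - \<phi> g" if "f \<in> Pring n" "g \<in> Pring n" for f g
    using phiadd[OF Pring_diff[OF that] that(2)] by (simp add: eq_diff_eq)
  have "\<forall>j. \<exists>f. j < m \<longrightarrow> f \<in> Pring n \<and> Var j - \<phi> f \<in> J"
    using surj Pring_Var by blast
  then obtain F where F: "\<And>j. j < m \<Longrightarrow> F j \<in> Pring n \<and> Var j - \<phi> (F j) \<in> J" by metis
  define u where "u j = F j - Const (Poly_Mapping.lookup (F j) 0)" for j
  let ?U = "u ` {..<m}"
  have uM: "u j \<in> Mideal n" if "j < m" for j
    using F[OF that] by (simp add: u_def Mideal_def Pring_diff lookup_minus lookup_Const)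
  let ?T = "vs.span (?U \<union> M2)"
  have TM: "?T \<subseteq> Mideal n"
    by (rule vs.span_minimal) (use uM M2_sub_M Mideal_subspace in \<open>auto simp: M2_def\<close>)
  let ?S = "{Const k + v | k v. v \<in> ?T}"
  have Sadd: "a + b \<in> ?S" if aS: "a \<in> ?S" and bS: "b \<in> ?S" for a b
  proof -
    obtain k1 v1 where "a = Const k1 + v1" "v1 \<in> ?T" using aS by blast
    moreover obtain k2 v2 where "b = Const k2 + v2" "v2 \<in> ?T" using bS by blast
    ultimately have "a + b = Const (k1 + k2) + (v1 + v2)" "v1 + v2 \<in> ?T"
      by (auto simp: Const_add algebra_simps intro: vs.span_add)
    then show ?thesis by blast
  qed
  have Smult: "a * b \<in> ?S" if aS: "a \<in> ?S" and bS: "b \<in> ?S" for a b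
  proof -
    obtain k1 v1 where ab1: "a = Const k1 + v1" "v1 \<in> ?T" using aS by blast
    obtain k2 v2 where ab2: "b = Const k2 + v2" "v2 \<in> ?T" using bS by blast
    note ab = ab1 ab2
    have "v1 * v2 \<in> M2" unfolding M2_def using ab TM by (auto intro: ideal_prod_single)
    then have "v1 * v2 \<in> ?T" by (intro vs.span_base) auto
    then have "pscale k1 v2 + pscale k2 v1 + v1 * v2 \<in> ?T" using ab
      by (intro vs.span_add vs.span_scale) auto
    moreover have "a * b = Const (k1 * k2) + (pscale k1 v2 + pscale k2 v1 + v1 * v2)"
      using ab by (simp add: Const_mult pscale_def algebra_simps)
    ultimately show ?thesis by blast
  qed
  have Sconst: "Const c \<in> ?S" for c using vs.span_zero by force
  have FS: "F j \<in> ?S" if "j < m" for j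
  proof -
    have "F j = Const (Poly_Mapping.lookup (F j) 0) + u j" by (simp add: u_def)
    moreover have "u j \<in> ?T" using that by (intro vs.span_base) auto
    ultimately show ?thesis by blast
  qed
  let ?V = "vs.span (?U \<union> Wsp)"
  have TV: "?T \<subseteq> ?V" using M2_W by (intro vs.span_mono) auto
  have varV: "Var i \<in> ?V" if i: "i < n" for i
  proof -
    let ?h = "\<phi> (Var i)"
    have hP: "?h \<in> Pring m" using phiP Pring_Var[OF i] .
    have hind: "\<And>j. j \<in> indets ?h \<Longrightarrow> j < m" using hP by (auto simp: Pring_def)
    have d1: "subst Var ?h - subst (\<phi> \<circ> F) ?h \<in> J"
      by (rule subst_diff_ideal[OF J]) (use F hind phiP in \<open>auto intro: Pring_Var\<close>)
    have d2: "\<phi> (subst F ?h) = subst (\<phi> \<circ> F) ?h"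
      by (rule hom_subst[where S="Pring n"]) (use phiadd phimult phiconst F hind in \<open>auto intro: Pring_add Pring_mult\<close>)
    have sFP: "subst F ?h \<in> Pring n" by (rule Pring_subst) (use F hind in auto)
    have "\<phi> (Var i - subst F ?h) \<in> J" using d1 d2 phidiff[OF Pring_Var[OF i] sFP] by simp
    then have inI: "Var i - subst F ?h \<in> I" using ker Pring_diff[OF Pring_Var[OF i] sFP] by blast
    have "subst F ?h \<in> ?S"
    proof (rule subst_closed)
      fix a b assume "a \<in> ?S" "b \<in> ?S" then show "a + b \<in> ?S" by (rule Sadd)
    next
      fix a b assume "a \<in> ?S" "b \<in> ?S" then show "a * b \<in> ?S" by (rule Smult)
    next
      fix c show "Const c \<in> ?S" by (rule Sconst)
    next
      fix j assume "j \<in> indets ?h" then show "F j \<in> ?S" using FS hind by blast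
    qed
    then obtain k v where kv: "subst F ?h = Const k + v" "v \<in> ?T" by blast
    have v0: "Poly_Mapping.lookup v 0 = 0" using kv(2) TM by (auto simp: Mideal_def)
    have "Poly_Mapping.lookup (Var i - subst F ?h) 0 = 0" using inI IM by (auto simp: Mideal_def)
    then have "k = 0" using kv(1) v0 single_nz[of i] by (simp add: lookup_minus lookup_add lookup_Const lookup_Var')
    then have "Var i = (Var i - subst F ?h) + v" using kv by simp
    moreover have "Var i - subst F ?h \<in> ?V" using inI I_W by (intro vs.span_base) auto
    moreover have "v \<in> ?V" using kv TV by auto
    ultimately show ?thesis using vs.span_add by metis
  qed
  have MV: "Mideal n \<subseteq> ?V"
  proof
    fix p :: "'k mpoly" assume p: "p \<in> Mideal n"
    have "vs.span (Var ` {..<n} \<union> M2) \<subseteq> ?V"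
      by (rule vs.span_minimal) (use varV M2_W in \<open>auto intro: vs.span_base\<close>)
    then show "p \<in> ?V" using M_span[OF p] unfolding M2_def by blast
  qed
  obtain C where C: "vs.subspace C" "C \<subseteq> Mideal n" "C \<inter> Wsp = {0}" "cotdim n I = kdim C"
    using cotdim_eq by blast
  have "vs.dim C \<le> card ?U"
    by (rule vector_space.dim_bound[OF vs_pscale W_subspace C(1)]) (use C MV in auto)
  also have "\<dots> \<le> m" using card_image_le[of "{..<m}" u] by simp
  finally show ?thesis using C(4) by (simp add: kdim_def)
qed

end

theorem theorem4p1:
  fixes n :: nat and I :: "('k::field) mpoly set" and G :: "'k mpoly set"
    and le :: "(nat \<Rightarrow>\<^sub>0 nat) \<Rightarrow> (nat \<Rightarrow>\<^sub>0 nat) \<Rightarrow> bool"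
  assumes "is_ideal n I" and "I \<subseteq> Mideal n"
    and "term_order n le" and "reduced_GB n le I G"
  shows "card (LI n le G) \<le> kdim (LinI I) \<and>
         (cotdim n I \<le> edim n I \<and> edim n I \<le> sepdim n I \<and> sepdim n I \<le> n - card (LI n le G))"
proof -
  interpret gbsetup n I G le using assms by unfold_locales
  have A: "card (LI n le G) \<le> kdim (LinI I)" by (rule partA)
  have "\<exists>J. is_ideal (n - card ({}::nat set)) J \<and> quot_iso n I (n - card ({}::nat set)) J"
    by (rule partC_iso[OF assms(1), of "{}" "\<lambda>_. 0"]) (auto simp: coherently_separating_def)
  then have ex: "\<exists>m J. is_ideal m J \<and> quot_iso n I m J" by blast
  have "\<exists>J. is_ideal (edim n I) J \<and> quot_iso n I (edim n I) J"
    unfolding edim_def by (rule LeastI_ex[OF ex])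
  then obtain J where J: "is_ideal (edim n I) J" "quot_iso n I (edim n I) J" by blast
  have B: "cotdim n I \<le> edim n I" by (rule cotdim_le[OF assms(1,2) J])
  have C: "edim n I \<le> sepdim n I" by (rule edim_le_sepdim[OF assms(1)])
  have D: "sepdim n I \<le> n - card (LI n le G)" by (rule sepdim_bound)
  show ?thesis using A B C D by blast
qed


end
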